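(* Let $\widetilde{\mathfrak{a}}$ be an algebra which is free and finite over the DVR $\mathcal{O}$ such that $\widetilde{\mathfrak{a}}_K=K\otimes\widetilde{\mathfrak{a}}$ has a tight grading $\widetilde{\mathfrak{a}}_K=\bigoplus_{n\ge0}\widetilde{\mathfrak{a}}_{K,n}$ and $\widetilde{\mathfrak{a}}$ has a positive grading $\widetilde{\mathfrak{a}}=\bigoplus_{r\ge0}\widetilde{\mathfrak{a}}_r$ with $K\widetilde{\mathfrak{a}}_r=\widetilde{\mathfrak{a}}_{K,r}$ for each $r$. Then: (a) For each $r\in\mathbb{N}$, $\widetilde{\mathfrak{a}}_r=\widetilde{\mathfrak{a}}\cap\widetilde{\mathfrak{a}}_{K,r}$ and $\sum_{i\ge r}\widetilde{\mathfrak{a}}_i=\widetilde{\mathfrak{a}}\cap\operatorname{rad}^r\widetilde{\mathfrak{a}}_K$; and there is an isomorphism of graded $\mathcal{O}$-algebras $\widetilde{\mathfrak{a}}\to\operatorname{gr}\widetilde{\mathfrak{a}}$ sending $x\in\widetilde{\mathfrak{a}}_r$ to its image in $\widetilde{\operatorname{rad}}^r\widetilde{\mathfrak{a}}/\widetilde{\operatorname{rad}}^{r+1}\widetilde{\mathfrak{a}}=(\operatorname{gr}\widetilde{\mathfrak{a}})_r$. (b) For an $\widetilde{\mathfrak{a}}$-lattice $\widetilde{M}$, the following are equivalent: (i) $\widetilde{M}$ is tight; (ii) $\sum_{i\ge r}\widetilde{\mathfrak{a}}_i\widetilde{M}=\widetilde{\operatorname{rad}}^r\widetilde{M}$ for each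 $r\in\mathbb{N}$; (iii) the $\operatorname{gr}\widetilde{\mathfrak{a}}$-lattice $\operatorname{gr}\widetilde{M}$ is generated by $(\operatorname{gr}\widetilde{M})_0$.
   Context: $\mathcal{O}$: DVR with fraction field $K$. A tight grading of the finite-dimensional $K$-algebra $\widetilde{\mathfrak{a}}_K$ is a positive algebra grading with $\widetilde{\mathfrak{a}}_{K,0}$ semisimple and $\widetilde{\mathfrak{a}}_K$ generated as algebra by $\widetilde{\mathfrak{a}}_{K,0}+\widetilde{\mathfrak{a}}_{K,1}$ (equivalently $\widetilde{\mathfrak{a}}_K\cong\operatorname{gr}\widetilde{\mathfrak{a}}_K$ as graded algebras). The grading of $\widetilde{\mathfrak{a}}$ is a grading as $\mathcal{O}$-algebra with $\widetilde{\mathfrak{a}}\subseteq\widetilde{\mathfrak{a}}_K$. $\widetilde{\operatorname{rad}}^r\widetilde{\mathfrak{a}}=\widetilde{\mathfrak{a}}\cap(\operatorname{rad}\widetilde{\mathfrak{a}}_K)^r$, $\operatorname{gr}\widetilde{\mathfrak{a}}=\bigoplus_r\widetilde{\operatorname{rad}}^r\widetilde{\mathfrak{a}}/\widetilde{\operatorname{rad}}^{r+1}\widetilde{\mathfrak{a}}$. An $\widetilde{\mathfrak{a}}$-lattice is an $\mathcal{O}$-finite torsion-free module; $\widetilde{\operatorname{rad}}^r\widetilde{M}=\widetilde{M}\cap(\operatorname{rad}\widetilde{\mathfrak{a}}_K)^r\widetilde{M}_K$, $\operatorname{gr}\widetilde{M}=\bigoplus_r\widetilde{\operatorname{rad}}^r\widetilde{M}/\widetilde{\operatorname{rad}}^{r+1}\widetilde{M}$.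 $\widetilde{M}$ is tight if $\widetilde{\operatorname{rad}}^r\widetilde{M}=(\widetilde{\operatorname{rad}}^r\widetilde{\mathfrak{a}})\widetilde{M}$ for all $r\in\mathbb{N}$. *)

theory Defs
  imports Main
begin

definition coset :: "'v::plus set \<Rightarrow> 'v \<Rightarrow> 'v set" where
  "coset S x = (\<lambda>z. x + z) ` S"

inductive_set addspan :: "'v::ab_group_add set \<Rightarrow> 'v set" for X where
  as_zero: "0 \<in> addspan X"
| as_base: "x \<in> X \<Longrightarrow> x \<in> addspan X"
| as_add: "x \<in> addspan X \<Longrightarrow> y \<in> addspan X \<Longrightarrow> x + y \<in> addspan X"
| as_neg: "x \<in> addspan X \<Longrightarrow> - x \<in> addspan X"

text \<open>Span with coefficients from the scalar set S (e.g. S = Ov or S = UNIV = K).\<close>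
definition lspan :: "('s \<Rightarrow> 'v \<Rightarrow> 'v) \<Rightarrow> 's set \<Rightarrow> 'v set \<Rightarrow> 'v::comm_monoid_add set" where
  "lspan sc S X = {\<Sum>x\<in>F. sc (c x) x | F c. finite F \<and> F \<subseteq> X \<and> (\<forall>x\<in>F. c x \<in> S)}"

definition lin_indep :: "('k::zero \<Rightarrow> 'v \<Rightarrow> 'v) \<Rightarrow> 'v::comm_monoid_add set \<Rightarrow> bool" where
  "lin_indep sc B \<longleftrightarrow> (\<forall>c. (\<Sum>x\<in>B. sc (c x) x) = 0 \<longrightarrow> (\<forall>x\<in>B. c x = 0))"

definition submod :: "('s \<Rightarrow> 'v \<Rightarrow> 'v) \<Rightarrow> 's set \<Rightarrow> 'v::monoid_add set \<Rightarrow> bool" where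
  "submod sc S X \<longleftrightarrow> 0 \<in> X \<and> (\<forall>x\<in>X. \<forall>y\<in>X. x + y \<in> X) \<and> (\<forall>c\<in>S. \<forall>x\<in>X. sc c x \<in> X)"

definition vs_axioms :: "('k::field \<Rightarrow> 'v::ab_group_add \<Rightarrow> 'v) \<Rightarrow> bool" where
  "vs_axioms sc \<longleftrightarrow> (\<forall>x. sc 1 x = x) \<and> (\<forall>a b x. sc (a * b) x = sc a (sc b x))
     \<and> (\<forall>a b x. sc (a + b) x = sc a x + sc b x) \<and> (\<forall>a x y. sc a (x + y) = sc a x + sc a y)"

definition kalg :: "('k::field \<Rightarrow> 'a::ring_1 \<Rightarrow> 'a) \<Rightarrow> bool" where
  "kalg sc \<longleftrightarrow> vs_axioms sc \<and> (\<forall>a x y. sc a (x * y) = sc a x * y \<and> sc a (x * y) = x * sc a y)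
     \<and> (\<exists>B. finite B \<and> lspan sc UNIV B = UNIV)"

definition kmod :: "('k::field \<Rightarrow> 'a::ring_1 \<Rightarrow> 'a) \<Rightarrow> ('k \<Rightarrow> 'm::ab_group_add \<Rightarrow> 'm)
    \<Rightarrow> ('a \<Rightarrow> 'm \<Rightarrow> 'm) \<Rightarrow> bool" where
  "kmod sc scm act \<longleftrightarrow> vs_axioms scm \<and> (\<forall>m. act 1 m = m) \<and> (\<forall>x y m. act (x * y) m = act x (act y m))
     \<and> (\<forall>x y m. act (x + y) m = act x m + act y m) \<and> (\<forall>x m n. act x (m + n) = act x m + act x n)
     \<and> (\<forall>c x m. act (sc c x) m = scm c (act x m)) \<and> (\<forall>c x m. act x (scm c m) = scm c (act x m))"

definition dvr :: "'k::field set \<Rightarrow> bool" where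
  "dvr Ov \<longleftrightarrow> 1 \<in> Ov \<and> (\<forall>x\<in>Ov. \<forall>y\<in>Ov. x + y \<in> Ov \<and> x * y \<in> Ov \<and> - x \<in> Ov)
     \<and> (\<exists>p\<in>Ov. p \<noteq> 0 \<and> inverse p \<notin> Ov \<and>
          (\<forall>x. x \<noteq> 0 \<longrightarrow> (\<exists>u n. u \<in> Ov \<and> inverse u \<in> Ov \<and> (x = u * p ^ n \<or> x = u * inverse (p ^ n)))))"

definition graded_ds :: "(nat \<Rightarrow> 'v::comm_monoid_add set) \<Rightarrow> 'v set \<Rightarrow> bool" where
  "graded_ds G V \<longleftrightarrow> (\<forall>n. G n \<subseteq> V) \<and>
     (\<forall>x\<in>V. \<exists>!f. (\<forall>n. f n \<in> G n) \<and> finite {n. f n \<noteq> 0} \<and> x = sum f {n. f n \<noteq> 0})"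

inductive_set alg_gen :: "('k \<Rightarrow> 'a::ring_1 \<Rightarrow> 'a) \<Rightarrow> 'a set \<Rightarrow> 'a set" for sc X where
  ag_base: "x \<in> X \<Longrightarrow> x \<in> alg_gen sc X"
| ag_one: "1 \<in> alg_gen sc X"
| ag_sc: "x \<in> alg_gen sc X \<Longrightarrow> sc c x \<in> alg_gen sc X"
| ag_add: "x \<in> alg_gen sc X \<Longrightarrow> y \<in> alg_gen sc X \<Longrightarrow> x + y \<in> alg_gen sc X"
| ag_mul: "x \<in> alg_gen sc X \<Longrightarrow> y \<in> alg_gen sc X \<Longrightarrow> x * y \<in> alg_gen sc X"

definition jrad :: "'a::ring_1 set" where
  "jrad = {x. \<forall>y. \<exists>z. z * (1 - y * x) = 1}"

definition semisimple_sub :: "'a::ring_1 set \<Rightarrow> bool" where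
  "semisimple_sub R \<longleftrightarrow> (\<forall>x\<in>R. (\<forall>y\<in>R. \<exists>z\<in>R. z * (1 - y * x) = 1) \<longrightarrow> x = 0)"

primrec idpow :: "'a::ring_1 set \<Rightarrow> nat \<Rightarrow> 'a set" where
  "idpow J 0 = UNIV"
| "idpow J (Suc r) = addspan {x * y | x y. x \<in> J \<and> y \<in> idpow J r}"

definition tight_grading :: "('k::field \<Rightarrow> 'a::ring_1 \<Rightarrow> 'a) \<Rightarrow> (nat \<Rightarrow> 'a set) \<Rightarrow> bool" where
  "tight_grading sc G \<longleftrightarrow> (\<forall>n. submod sc UNIV (G n)) \<and> graded_ds G UNIV
     \<and> (\<forall>i j. \<forall>x\<in>G i. \<forall>y\<in>G j. x * y \<in> G (i + j)) \<and> 1 \<in> G 0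
     \<and> semisimple_sub (G 0) \<and> alg_gen sc (G 0 \<union> G 1) = UNIV"

definition sumge :: "(nat \<Rightarrow> 'v::comm_monoid_add set) \<Rightarrow> nat \<Rightarrow> 'v set" where
  "sumge G r = {sum f F | F f. finite F \<and> (\<forall>i\<in>F. r \<le> i \<and> f i \<in> G i)}"

definition ratil :: "'a::ring_1 set \<Rightarrow> nat \<Rightarrow> 'a set" where
  "ratil A r = A \<inter> idpow jrad r"

definition radM :: "('a::ring_1 \<Rightarrow> 'm::ab_group_add \<Rightarrow> 'm) \<Rightarrow> 'm set \<Rightarrow> nat \<Rightarrow> 'm set" where
  "radM act M r = M \<inter> addspan {act x m | x m. x \<in> idpow jrad r}"

text \<open>Elements of gr w.r.t. a filtration F: families of cosets c r in F r / F (r+1), almost all zero.\<close>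
definition grcar :: "(nat \<Rightarrow> 'v::ab_group_add set) \<Rightarrow> (nat \<Rightarrow> 'v set) set" where
  "grcar F = {c. (\<forall>r. \<exists>x\<in>F r. c r = coset (F (Suc r)) x) \<and> finite {r. c r \<noteq> F (Suc r)}}"

definition grzero :: "(nat \<Rightarrow> 'v::ab_group_add set) \<Rightarrow> nat \<Rightarrow> 'v set" where
  "grzero F r = F (Suc r)"

definition gradd :: "(nat \<Rightarrow> 'v::ab_group_add set) \<Rightarrow> (nat \<Rightarrow> 'v set) \<Rightarrow> (nat \<Rightarrow> 'v set) \<Rightarrow> nat \<Rightarrow> 'v set" where
  "gradd F c d r = {x + y | x y. x \<in> c r \<and> y \<in> d r}"

text \<open>Action of gr (w.r.t. filtration F of the ring) on gr (w.r.t. filtration G), induced by act.\<close>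
definition gract :: "('a \<Rightarrow> 'v \<Rightarrow> 'v) \<Rightarrow> (nat \<Rightarrow> 'a set) \<Rightarrow> (nat \<Rightarrow> 'v::ab_group_add set)
    \<Rightarrow> (nat \<Rightarrow> 'a set) \<Rightarrow> (nat \<Rightarrow> 'v set) \<Rightarrow> nat \<Rightarrow> 'v set" where
  "gract act F G c d n = {(\<Sum>i\<le>n. act (x i) (y i)) + z | x y z.
       (\<forall>i\<le>n. x i \<in> c i \<and> y i \<in> d (n - i)) \<and> z \<in> G (Suc n)}"

definition grmul :: "(nat \<Rightarrow> 'a::ring_1 set) \<Rightarrow> (nat \<Rightarrow> 'a set) \<Rightarrow> (nat \<Rightarrow> 'a set) \<Rightarrow> nat \<Rightarrow> 'a set" where
  "grmul F = gract (*) F F"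

definition grone :: "(nat \<Rightarrow> 'a::ring_1 set) \<Rightarrow> nat \<Rightarrow> 'a set" where
  "grone F r = coset (F (Suc r)) (if r = 0 then 1 else 0)"

definition grsmul :: "('s \<Rightarrow> 'v \<Rightarrow> 'v) \<Rightarrow> (nat \<Rightarrow> 'v::ab_group_add set) \<Rightarrow> 's \<Rightarrow> (nat \<Rightarrow> 'v set) \<Rightarrow> nat \<Rightarrow> 'v set" where
  "grsmul sc F a c r = {sc a x + z | x z. x \<in> c r \<and> z \<in> F (Suc r)}"

text \<open>The homogeneous element of degree r given by the image of x in F r / F (r+1).\<close>
definition grsingle :: "(nat \<Rightarrow> 'v::ab_group_add set) \<Rightarrow> nat \<Rightarrow> 'v \<Rightarrow> nat \<Rightarrow> 'v set" where
  "grsingle F r x = (\<lambda>n. if n = r then coset (F (Suc n)) x else F (Suc n))"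

inductive_set grspan :: "('a::ab_group_add \<Rightarrow> 'v \<Rightarrow> 'v) \<Rightarrow> (nat \<Rightarrow> 'a set) \<Rightarrow> (nat \<Rightarrow> 'v::ab_group_add set)
    \<Rightarrow> (nat \<Rightarrow> 'v set) set \<Rightarrow> (nat \<Rightarrow> 'v set) set" for act F G S where
  gs_base: "d \<in> S \<Longrightarrow> d \<in> grspan act F G S"
| gs_zero: "grzero G \<in> grspan act F G S"
| gs_add: "c \<in> grspan act F G S \<Longrightarrow> d \<in> grspan act F G S \<Longrightarrow> gradd G c d \<in> grspan act F G S"
| gs_act: "c \<in> grcar F \<Longrightarrow> d \<in> grspan act F G S \<Longrightarrow> gract act F G c d \<in> grspan act F G S"

text \<open>An A-lattice M inside the K-vector space 'm = K \<otimes> M.\<close>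
definition is_lattice :: "'k set \<Rightarrow> ('k \<Rightarrow> 'm::ab_group_add \<Rightarrow> 'm) \<Rightarrow> ('a \<Rightarrow> 'm \<Rightarrow> 'm) \<Rightarrow> 'a set \<Rightarrow> 'm set \<Rightarrow> bool" where
  "is_lattice Ov scm act A M \<longleftrightarrow> submod scm Ov M \<and> (\<forall>x\<in>A. \<forall>m\<in>M. act x m \<in> M)
     \<and> (\<exists>G. finite G \<and> M = lspan scm Ov G) \<and> lspan scm UNIV M = UNIV"

definition tight_lattice :: "('a::ring_1 \<Rightarrow> 'm::ab_group_add \<Rightarrow> 'm) \<Rightarrow> 'a set \<Rightarrow> 'm set \<Rightarrow> bool" where
  "tight_lattice act A M \<longleftrightarrow>
     (\<forall>r. radM act M r = addspan {act x m | x m. x \<in> ratil A r \<and> m \<in> M})"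

end

theory Submission
  imports Defs
begin


definition subgrp :: "'v::ab_group_add set \<Rightarrow> bool" where
  "subgrp S \<longleftrightarrow> 0 \<in> S \<and> (\<forall>x\<in>S. \<forall>y\<in>S. x + y \<in> S) \<and> (\<forall>x\<in>S. - x \<in> S)"

lemma subgrpD:
  assumes "subgrp S"
  shows "0 \<in> S" "x \<in> S \<Longrightarrow> y \<in> S \<Longrightarrow> x + y \<in> S" "x \<in> S \<Longrightarrow> - x \<in> S"
    "x \<in> S \<Longrightarrow> y \<in> S \<Longrightarrow> x - y \<in> S"
proof -
  have h: "0 \<in> S" "\<forall>x\<in>S. \<forall>y\<in>S. x + y \<in> S" "\<forall>x\<in>S. - x \<in> S"
    using assms unfolding subgrp_def by blast+
  show "0 \<in> S" by (rule h(1))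
  show "x \<in> S \<Longrightarrow> y \<in> S \<Longrightarrow> x + y \<in> S" using h(2) by blast
  show "x \<in> S \<Longrightarrow> - x \<in> S" using h(3) by blast
  assume "x \<in> S" "y \<in> S"
  then have "x + (- y) \<in> S" using h(2,3) by blast
  then show "x - y \<in> S" by simp
qed

lemma subgrp_sum:
  assumes "subgrp S" "\<forall>i\<in>I. f i \<in> S"
  shows "sum f I \<in> S"
  using assms(2)
proof (induction I rule: infinite_finite_induct)
  case (infinite A) then show ?case using subgrpD(1)[OF assms(1)] by simp
next
  case empty then show ?case using subgrpD(1)[OF assms(1)] by simp
next
  case (insert x F) then show ?case using subgrpD(2)[OF assms(1)] by simp
qed

lemma subgrp_Int: "subgrp S \<Longrightarrow> subgrp T \<Longrightarrow> subgrp (S \<inter> T)"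
  unfolding subgrp_def by auto

lemma subgrp_addspan: "subgrp (addspan X)"
  unfolding subgrp_def by (auto intro: addspan.intros)

lemma addspan_sub:
  assumes "subgrp S" "X \<subseteq> S"
  shows "addspan X \<subseteq> S"
proof
  fix z assume "z \<in> addspan X"
  then show "z \<in> S"
    by induction (use assms subgrpD[OF assms(1)] in auto)
qed

lemma addspan_base_sub: "X \<subseteq> addspan X"
  by (auto intro: addspan.intros)

lemma addspan_mono: "X \<subseteq> Y \<Longrightarrow> addspan X \<subseteq> addspan Y"
  by (rule addspan_sub[OF subgrp_addspan]) (auto intro: addspan.intros)

lemma addspan_map:
  assumes add: "\<And>x y. f (x + y) = f x + f y"
    and base: "\<And>x. x \<in> X \<Longrightarrow> f x \<in> addspan Y"
    and z: "z \<in> addspan X"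
  shows "f z \<in> addspan Y"
proof -
  have f0: "f 0 = 0" using add[of 0 0] by simp
  have fneg: "f (- x) = - f x" for x
  proof -
    have "f x + f (-x) = 0" using add[of x "-x"] f0 by simp
    then show ?thesis by (metis add.inverse_unique)
  qed
  from z show ?thesis
    by induction (auto simp: f0 fneg add base intro: addspan.intros)
qed

lemma addspan_sum: "finite I \<Longrightarrow> \<forall>i\<in>I. f i \<in> addspan X \<Longrightarrow> sum f I \<in> addspan X"
  using subgrp_sum[OF subgrp_addspan] by blast

lemma addspan_zero_set: "z \<in> addspan {0} \<Longrightarrow> z = 0"
  by (induction rule: addspan.induct) auto

lemma mem_coset: "x \<in> coset (S::'v::ab_group_add set) a \<longleftrightarrow> x - a \<in> S"
  unfolding coset_def image_iff
proof
  assume "\<exists>z\<in>S. x = a + z"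
  then obtain z where "z \<in> S" "x = a + z" by blast
  then show "x - a \<in> S" by simp
next
  assume "x - a \<in> S"
  moreover have "x = a + (x - a)" by simp
  ultimately show "\<exists>z\<in>S. x = a + z" by blast
qed

lemma coset_eq_iff:
  assumes "subgrp S"
  shows "coset S a = coset S b \<longleftrightarrow> a - b \<in> S"
proof
  assume "coset S a = coset S b"
  moreover have "a \<in> coset S a" using subgrpD(1)[OF assms] by (simp add: mem_coset)
  ultimately show "a - b \<in> S" by (simp add: mem_coset)
next
  assume h: "a - b \<in> S"
  show "coset S a = coset S b"
  proof (rule set_eqI)
    fix x
    have e1: "x - a = (x - b) - (a - b)" and e2: "x - b = (x - a) + (a - b)" by simp_all
    show "x \<in> coset S a \<longleftrightarrow> x \<in> coset S b"
      unfolding mem_coset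
    proof
      assume "x - a \<in> S" then show "x - b \<in> S" unfolding e2 using subgrpD(2)[OF assms _ h] by blast
    next
      assume "x - b \<in> S" then show "x - a \<in> S" unfolding e1 using subgrpD(4)[OF assms _ h] by blast
    qed
  qed
qed

lemma coset_zero: "coset (S::'v::monoid_add set) 0 = S"
proof -
  have "(\<lambda>z. 0 + z) = (\<lambda>z::'v. z)" by (rule ext) simp
  then show ?thesis unfolding coset_def by simp
qed

lemma coset_triv_iff:
  assumes "subgrp S" shows "coset S a = S \<longleftrightarrow> a \<in> S"
  using coset_eq_iff[OF assms, of a 0] by (simp add: coset_zero)

lemma coset_add:
  assumes "subgrp S"
  shows "{x + y | x y. x \<in> coset S a \<and> y \<in> coset S b} = coset S (a + b)"
proof (rule set_eqI)
  fix z
  show "z \<in> {x + y | x y. x \<in> coset S a \<and> y \<in> coset S b} \<longleftrightarrow> z \<in> coset S (a + b)"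
  proof
    assume "z \<in> {x + y | x y. x \<in> coset S a \<and> y \<in> coset S b}"
    then obtain x y where z: "z = x + y" and xy: "x \<in> coset S a" "y \<in> coset S b" by blast
    have xy': "x - a \<in> S" "y - b \<in> S" using xy unfolding mem_coset by auto
    have eq: "z - (a + b) = (x - a) + (y - b)" unfolding z by (simp add: algebra_simps)
    have "z - (a + b) \<in> S" unfolding eq by (rule subgrpD(2)[OF assms xy'])
    then show "z \<in> coset S (a + b)" unfolding mem_coset .
  next
    assume "z \<in> coset S (a + b)"
    then have A: "z - (a + b) \<in> S" unfolding mem_coset .
    have B: "z - b - a = z - (a + b)" by (simp add: algebra_simps)
    have h1: "z - b \<in> coset S a" unfolding mem_coset B by (rule A)
    have h2: "b \<in> coset S b" unfolding mem_coset using subgrpD(1)[OF assms] by simp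
    have "z = (z - b) + b" by simp
    with h1 h2 show "z \<in> {x + y | x y. x \<in> coset S a \<and> y \<in> coset S b}"
      by (intro CollectI exI[of _ "z - b"] exI[of _ b]) simp
  qed
qed



lemma gract_coset:
  fixes act :: "'a::ab_group_add \<Rightarrow> 'v::ab_group_add \<Rightarrow> 'v"
  assumes actl: "\<And>a b m. act (a + b) m = act a m + act b m"
    and actr: "\<And>a m n. act a (m + n) = act a m + act a n"
    and SG: "subgrp (G (Suc n))" "\<And>i. subgrp (F i)" "\<And>j. subgrp (G j)"
    and c: "\<And>i. i \<le> n \<Longrightarrow> c i = coset (F (Suc i)) (x i)"
    and d: "\<And>i. i \<le> n \<Longrightarrow> d (n - i) = coset (G (Suc (n - i))) (y i)"
    and err1: "\<And>i a b. i \<le> n \<Longrightarrow> a \<in> F (Suc i) \<Longrightarrow> b \<in> coset (G (Suc (n - i))) (y i) \<Longrightarrow> act a b \<in> G (Suc n)"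
    and err2: "\<And>i b. i \<le> n \<Longrightarrow> b \<in> G (Suc (n - i)) \<Longrightarrow> act (x i) b \<in> G (Suc n)"
  shows "gract act F G c d n = coset (G (Suc n)) (\<Sum>i\<le>n. act (x i) (y i))"
proof (rule set_eqI)
  fix w
  show "w \<in> gract act F G c d n \<longleftrightarrow> w \<in> coset (G (Suc n)) (\<Sum>i\<le>n. act (x i) (y i))"
  proof
    assume "w \<in> gract act F G c d n"
    then have "\<exists>x' y' z. w = (\<Sum>i\<le>n. act (x' i) (y' i)) + z \<and> (\<forall>i\<le>n. x' i \<in> c i \<and> y' i \<in> d (n - i)) \<and> z \<in> G (Suc n)"
      unfolding gract_def mem_Collect_eq .
    then obtain x' y' z where w: "w = (\<Sum>i\<le>n. act (x' i) (y' i)) + z"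
      and xy: "\<forall>i\<le>n. x' i \<in> c i \<and> y' i \<in> d (n - i)" and z: "z \<in> G (Suc n)"
      by (elim exE conjE)
    have e: "act (x' i) (y' i) - act (x i) (y i) \<in> G (Suc n)" if i: "i \<le> n" for i
    proof -
      have "x' i - x i \<in> F (Suc i)" using xy c i by (simp add: mem_coset)
      have yi: "y' i \<in> coset (G (Suc (n - i))) (y i)" using xy d i by simp
      then have "y' i - y i \<in> G (Suc (n - i))" by (simp add: mem_coset)
      have "act (x' i) (y' i) = act (x' i - x i) (y' i) + act (x i) (y' i - y i) + act (x i) (y i)"
        using actl[of "x' i - x i" "x i" "y' i"] actr[of "x i" "y' i - y i" "y i"] by simp
      then have "act (x' i) (y' i) - act (x i) (y i) = act (x' i - x i) (y' i) + act (x i) (y' i - y i)"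
        by simp
      moreover have "act (x' i - x i) (y' i) \<in> G (Suc n)"
        using err1[OF i \<open>x' i - x i \<in> F (Suc i)\<close> yi] .
      moreover have "act (x i) (y' i - y i) \<in> G (Suc n)"
        using err2[OF i \<open>y' i - y i \<in> G (Suc (n - i))\<close>] .
      ultimately show ?thesis using subgrpD(2)[OF SG(1)] by simp
    qed
    have "w - (\<Sum>i\<le>n. act (x i) (y i)) = (\<Sum>i\<le>n. act (x' i) (y' i) - act (x i) (y i)) + z"
      using w by (simp add: sum_subtractf)
    also have "\<dots> \<in> G (Suc n)"
    proof -
      have "(\<Sum>i\<le>n. act (x' i) (y' i) - act (x i) (y i)) \<in> G (Suc n)"
        by (rule subgrp_sum[OF SG(1)]) (use e in auto)
      then show ?thesis using z subgrpD(2)[OF SG(1)] by blast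
    qed
    finally show "w \<in> coset (G (Suc n)) (\<Sum>i\<le>n. act (x i) (y i))" by (simp add: mem_coset)
  next
    assume "w \<in> coset (G (Suc n)) (\<Sum>i\<le>n. act (x i) (y i))"
    then have z: "w - (\<Sum>i\<le>n. act (x i) (y i)) \<in> G (Suc n)" by (simp add: mem_coset)
    have "\<forall>i\<le>n. x i \<in> c i \<and> y i \<in> d (n - i)"
      using c d subgrpD(1)[OF SG(2)] subgrpD(1)[OF SG(3)] by (simp add: mem_coset)
    then have "\<exists>x' y' z. w = (\<Sum>i\<le>n. act (x' i) (y' i)) + z \<and> (\<forall>i\<le>n. x' i \<in> c i \<and> y' i \<in> d (n - i)) \<and> z \<in> G (Suc n)"
      using z by (intro exI[of _ x] exI[of _ y] exI[of _ "w - (\<Sum>i\<le>n. act (x i) (y i))"]) simp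
    then show "w \<in> gract act F G c d n"
      unfolding gract_def mem_Collect_eq .
  qed
qed




section \<open>Scalar actions\<close>

lemma vs_simps:
  assumes "vs_axioms sc"
  shows "sc 1 x = x" "sc (a * b) x = sc a (sc b x)" "sc (a + b) x = sc a x + sc b x"
    "sc a (x + y) = sc a x + sc a y"
  using assms unfolding vs_axioms_def by auto

lemma vs_zero_right: "vs_axioms sc \<Longrightarrow> sc a 0 = 0"
  using vs_simps(4)[of sc a 0 0] by simp

lemma vs_zero_left: "vs_axioms sc \<Longrightarrow> sc 0 x = 0"
  using vs_simps(3)[of sc 0 0 x] by simp

lemma vs_neg_one: "vs_axioms sc \<Longrightarrow> sc (-1) x = - x"
proof -
  assume v: "vs_axioms sc"
  have "sc (-1) x + x = 0" using vs_simps(3)[OF v, of "-1" 1 x] vs_zero_left[OF v] vs_simps(1)[OF v] by simp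
  then show ?thesis by (simp add: eq_neg_iff_add_eq_0)
qed

lemma vs_minus_right: "vs_axioms sc \<Longrightarrow> sc a (- x) = - sc a x"
proof -
  assume v: "vs_axioms sc"
  have "sc a (- x) + sc a x = 0" using vs_simps(4)[OF v, of a "-x" x] vs_zero_right[OF v] by simp
  then show ?thesis by (simp add: eq_neg_iff_add_eq_0)
qed

lemma vs_sum: "vs_axioms sc \<Longrightarrow> sc a (sum f I) = (\<Sum>i\<in>I. sc a (f i))"
  by (induction I rule: infinite_finite_induct) (auto simp: vs_zero_right vs_simps(4))

lemma submod_subgrp:
  assumes "vs_axioms sc" "submod sc S X" "-1 \<in> S"
  shows "subgrp X"
proof -
  have h: "0 \<in> X" "\<forall>x\<in>X. \<forall>y\<in>X. x + y \<in> X" "\<forall>c\<in>S. \<forall>x\<in>X. sc c x \<in> X"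
    using assms(2) unfolding submod_def by auto
  have "\<forall>x\<in>X. - x \<in> X"
  proof
    fix x assume "x \<in> X"
    then have "sc (-1) x \<in> X" using h(3) assms(3) by blast
    then show "- x \<in> X" by (simp add: vs_neg_one[OF assms(1)])
  qed
  then show ?thesis unfolding subgrp_def using h(1,2) by blast
qed

lemma lspan_memI:
  "finite F \<Longrightarrow> F \<subseteq> X \<Longrightarrow> \<forall>x\<in>F. c x \<in> S \<Longrightarrow> y = (\<Sum>x\<in>F. sc (c x) x) \<Longrightarrow> y \<in> lspan sc S X"
  unfolding lspan_def by blast

lemma lspan_add:
  assumes v: "vs_axioms sc" and S: "0 \<in> S" "\<forall>a\<in>S. \<forall>b\<in>S. a + b \<in> S"
    and x: "x \<in> lspan sc S X" and y: "y \<in> lspan sc S X"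
  shows "x + y \<in> lspan sc S X"
proof -
  obtain F c where F: "finite F" "F \<subseteq> X" "\<forall>z\<in>F. c z \<in> S" "x = (\<Sum>z\<in>F. sc (c z) z)"
    using x unfolding lspan_def by blast
  obtain G d where G: "finite G" "G \<subseteq> X" "\<forall>z\<in>G. d z \<in> S" "y = (\<Sum>z\<in>G. sc (d z) z)"
    using y unfolding lspan_def by blast
  define c' where "c' z = (if z \<in> F then c z else 0)" for z
  define d' where "d' z = (if z \<in> G then d z else 0)" for z
  have fin: "finite (F \<union> G)" using F(1) G(1) by simp
  have "x = (\<Sum>z\<in>F \<union> G. sc (c' z) z)"
    unfolding F(4)
  proof (rule sum.mono_neutral_cong_left[OF fin])
    show "\<forall>i\<in>F \<union> G - F. sc (c' i) i = 0" by (simp add: c'_def vs_zero_left[OF v])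
    show "\<And>z. z \<in> F \<Longrightarrow> sc (c z) z = sc (c' z) z" by (simp add: c'_def)
  qed simp
  moreover have "y = (\<Sum>z\<in>F \<union> G. sc (d' z) z)"
    unfolding G(4)
  proof (rule sum.mono_neutral_cong_left[OF fin])
    show "\<forall>i\<in>F \<union> G - G. sc (d' i) i = 0" by (simp add: d'_def vs_zero_left[OF v])
    show "\<And>z. z \<in> G \<Longrightarrow> sc (d z) z = sc (d' z) z" by (simp add: d'_def)
  qed simp
  ultimately have "x + y = (\<Sum>z\<in>F \<union> G. sc (c' z + d' z) z)"
    by (simp add: vs_simps(3)[OF v] sum.distrib)
  moreover have "\<forall>z\<in>F \<union> G. c' z + d' z \<in> S"
    using F(3) G(3) S by (auto simp: c'_def d'_def)
  ultimately show ?thesis using F G by (intro lspan_memI[of "F \<union> G" _ "\<lambda>z. c' z + d' z"]) auto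
qed

lemma lspan_sc:
  assumes v: "vs_axioms sc" and S: "\<forall>a\<in>S. \<forall>b\<in>S. a * b \<in> S" and a: "a \<in> S"
    and x: "x \<in> lspan sc S X"
  shows "sc a x \<in> lspan sc S X"
proof -
  obtain F c where F: "finite F" "F \<subseteq> X" "\<forall>z\<in>F. c z \<in> S" "x = (\<Sum>z\<in>F. sc (c z) z)"
    using x unfolding lspan_def by blast
  have "sc a x = (\<Sum>z\<in>F. sc (a * c z) z)"
    by (simp add: F(4) vs_sum[OF v] vs_simps(2)[OF v])
  moreover have "\<forall>z\<in>F. a * c z \<in> S" using F(3) S a by auto
  ultimately show ?thesis using F by (intro lspan_memI[of F _ "\<lambda>z. a * c z"]) auto
qed

lemma lspan_base:
  assumes v: "vs_axioms sc" and "1 \<in> S" "x \<in> X"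
  shows "x \<in> lspan sc S X"
proof (rule lspan_memI[of "{x}" _ "\<lambda>_. 1"])
  show "x = (\<Sum>z\<in>{x}. sc 1 z)" by (simp add: vs_simps(1)[OF v])
qed (use assms in auto)




section \<open>The tightly graded algebra\<close>

locale tg =
  fixes sc :: "'k::field \<Rightarrow> 'a::ring_1 \<Rightarrow> 'a" and gK :: "nat \<Rightarrow> 'a set"
  assumes kalg: "kalg sc" and tgr: "tight_grading sc gK"
begin

lemma vs: "vs_axioms sc" using kalg unfolding kalg_def by auto

lemma sc_mul1: "sc a (x * y) = sc a x * y"
  using kalg unfolding kalg_def by blast

lemma sc_mul2: "sc a (x * y) = x * sc a y"
  using kalg unfolding kalg_def by blast

lemma gK_subgrp: "subgrp (gK n)"
  using tgr submod_subgrp[OF vs] unfolding tight_grading_def by blast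

lemma gK_sc: "x \<in> gK n \<Longrightarrow> sc c x \<in> gK n"
  using tgr unfolding tight_grading_def submod_def by blast

lemma gK_mul: "x \<in> gK i \<Longrightarrow> y \<in> gK j \<Longrightarrow> x * y \<in> gK (i + j)"
  using tgr unfolding tight_grading_def by blast

lemma one_gK: "1 \<in> gK 0"
  using tgr unfolding tight_grading_def by blast

lemma ds: "graded_ds gK UNIV"
  using tgr unfolding tight_grading_def by blast

definition hp :: "nat \<Rightarrow> 'a \<Rightarrow> 'a" where
  "hp n x = (THE f. (\<forall>n. f n \<in> gK n) \<and> finite {n. f n \<noteq> 0} \<and> x = sum f {n. f n \<noteq> 0}) n"

lemma hp_ex: "\<exists>!f. (\<forall>n. f n \<in> gK n) \<and> finite {n. f n \<noteq> 0} \<and> x = sum f {n. f n \<noteq> 0}"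
  using ds unfolding graded_ds_def by blast

lemma hp_unique:
  assumes "\<forall>n. f n \<in> gK n" "finite {n. f n \<noteq> 0}" "x = sum f {n. f n \<noteq> 0}"
  shows "hp n x = f n"
proof -
  have "(THE f. (\<forall>n. f n \<in> gK n) \<and> finite {n. f n \<noteq> 0} \<and> x = sum f {n. f n \<noteq> 0}) = f"
    by (rule the1_equality[OF hp_ex]) (use assms in blast)
  then show ?thesis unfolding hp_def by simp
qed

lemma hp_props: "\<forall>n. hp n x \<in> gK n" "finite {n. hp n x \<noteq> 0}" "x = (\<Sum>n\<in>{n. hp n x \<noteq> 0}. hp n x)"
proof -
  define f where "f = (THE f. (\<forall>n. f n \<in> gK n) \<and> finite {n. f n \<noteq> 0} \<and> x = sum f {n. f n \<noteq> 0})"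
  have hf: "(\<lambda>n. hp n x) = f" unfolding f_def hp_def by simp
  have "(\<forall>n. f n \<in> gK n) \<and> finite {n. f n \<noteq> 0} \<and> x = sum f {n. f n \<noteq> 0}"
    unfolding f_def by (rule theI'[OF hp_ex])
  then show "\<forall>n. hp n x \<in> gK n" "finite {n. hp n x \<noteq> 0}" "x = (\<Sum>n\<in>{n. hp n x \<noteq> 0}. hp n x)"
    unfolding hf[symmetric] by auto
qed

lemma hp_in: "hp n x \<in> gK n" using hp_props(1) by blast

lemma hp_unique_bd:
  assumes "\<forall>n. f n \<in> gK n" "\<forall>n\<ge>N. f n = 0" "x = (\<Sum>n<N. f n)"
  shows "hp n x = f n"
proof (rule hp_unique)
  have sub: "{n. f n \<noteq> 0} \<subseteq> {..<N}" using assms(2) by (auto simp: not_less[symmetric])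
  then show "finite {n. f n \<noteq> 0}" by (rule finite_subset) simp
  show "x = sum f {n. f n \<noteq> 0}" unfolding assms(3)
    by (rule sum.mono_neutral_right) (use sub in auto)
qed (use assms in auto)

lemma hp_bd: "\<exists>N. \<forall>n\<ge>N. hp n x = 0"
proof -
  obtain N where "\<forall>n\<in>{n. hp n x \<noteq> 0}. n < N"
    using hp_props(2) finite_nat_set_iff_bounded by blast
  then have "\<forall>n\<ge>N. hp n x = 0" by (auto simp: not_le[symmetric])
  then show ?thesis by blast
qed

lemma hp_expand_bd:
  assumes "\<forall>n\<ge>N. hp n x = 0"
  shows "x = (\<Sum>n<N. hp n x)"
proof -
  have sub: "{n. hp n x \<noteq> 0} \<subseteq> {..<N}" using assms by (auto simp: not_less[symmetric])
  have "x = (\<Sum>n\<in>{n. hp n x \<noteq> 0}. hp n x)" by (rule hp_props(3))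
  also have "\<dots> = (\<Sum>n<N. hp n x)"
    by (rule sum.mono_neutral_left) (use sub in auto)
  finally show ?thesis .
qed

lemma hp_add: "hp n (x + y) = hp n x + hp n y"
proof -
  obtain N1 where N1: "\<forall>n\<ge>N1. hp n x = 0" using hp_bd by blast
  obtain N2 where N2: "\<forall>n\<ge>N2. hp n y = 0" using hp_bd by blast
  let ?N = "max N1 N2"
  have "x = (\<Sum>n<?N. hp n x)" "y = (\<Sum>n<?N. hp n y)"
    using N1 N2 by (auto intro!: hp_expand_bd)
  then have "x + y = (\<Sum>n<?N. hp n x + hp n y)" by (simp add: sum.distrib)
  then show ?thesis
    by (rule hp_unique_bd[rotated 2]) (use N1 N2 hp_in subgrpD(2)[OF gK_subgrp] in auto)
qed

lemma hp_zero: "hp n 0 = 0"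
  using hp_add[of n 0 0] by simp

lemma hp_neg: "hp n (- x) = - hp n x"
  using hp_add[of n x "-x"] hp_zero by (simp add: eq_neg_iff_add_eq_0 add.commute)

lemma hp_diff: "hp n (x - y) = hp n x - hp n y"
  using hp_add[of n x "-y"] hp_neg by simp

lemma hp_sum: "hp n (sum f I) = (\<Sum>i\<in>I. hp n (f i))"
  by (induction I rule: infinite_finite_induct) (auto simp: hp_zero hp_add)

lemma hp_sc: "hp n (sc c x) = sc c (hp n x)"
proof -
  obtain N where N: "\<forall>n\<ge>N. hp n x = 0" using hp_bd by blast
  have "x = (\<Sum>n<N. hp n x)" using N by (rule hp_expand_bd)
  then have "sc c x = (\<Sum>n<N. sc c (hp n x))" by (metis vs_sum[OF vs])
  then show ?thesis
    by (rule hp_unique_bd[rotated 2]) (use N hp_in gK_sc vs_zero_right[OF vs] in auto)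
qed

lemma hp_homog: "x \<in> gK m \<Longrightarrow> hp n x = (if n = m then x else 0)"
  by (rule hp_unique_bd[where N="Suc m"])
     (auto simp: subgrpD(1)[OF gK_subgrp] lessThan_Suc)

definition N0 :: nat where
  "N0 = (SOME N. \<forall>x. \<forall>n\<ge>N. hp n x = 0)"

lemma N0_ex: "\<exists>N. \<forall>x. \<forall>n\<ge>N. hp n x = 0"
proof -
  obtain B where B: "finite B" "lspan sc UNIV B = UNIV" using kalg unfolding kalg_def by blast
  have "\<forall>b. \<exists>N. \<forall>n\<ge>N. hp n b = 0" using hp_bd by blast
  from choice[OF this] obtain Nb where Nb: "\<forall>b. \<forall>n\<ge>Nb b. hp n b = 0" by blast
  let ?N = "\<Sum>b\<in>B. Nb b"
  have "\<forall>n\<ge>?N. hp n x = 0" for x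
  proof (intro allI impI)
    fix n assume n: "n \<ge> ?N"
    have "x \<in> lspan sc UNIV B" using B by simp
    then obtain F c where F: "finite F" "F \<subseteq> B" "x = (\<Sum>z\<in>F. sc (c z) z)"
      unfolding lspan_def by blast
    have "hp n x = (\<Sum>z\<in>F. sc (c z) (hp n z))" by (simp add: F(3) hp_sum hp_sc)
    also have "\<dots> = 0"
    proof (rule sum.neutral, rule ballI)
      fix z assume "z \<in> F"
      then have "Nb z \<le> ?N" using F(2) B(1) by (intro member_le_sum) auto
      then show "sc (c z) (hp n z) = 0" using Nb n vs_zero_right[OF vs] by simp
    qed
    finally show "hp n x = 0" .
  qed
  then show ?thesis by blast
qed

lemma hp_N0: "n \<ge> N0 \<Longrightarrow> hp n x = 0"
  using someI_ex[OF N0_ex] unfolding N0_def by blast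

lemma hp_expand: "x = (\<Sum>n<N0. hp n x)"
  using hp_N0 by (intro hp_expand_bd) auto

lemma gK_N0: "n \<ge> N0 \<Longrightarrow> x \<in> gK n \<Longrightarrow> x = 0"
  using hp_N0[of n x] hp_homog[of x n n] by simp

lemma hp_one: "hp n 1 = (if n = 0 then 1 else 0)"
  using hp_homog[OF one_gK] by simp

lemma hp_mul: "hp n (x * y) = (\<Sum>i\<le>n. hp i x * hp (n - i) y)"
proof -
  define g where "g k = (\<Sum>i\<le>k. hp i x * hp (k - i) y)" for k
  have gin: "\<forall>k. g k \<in> gK k"
  proof
    fix k
    show "g k \<in> gK k" unfolding g_def
    proof (rule subgrp_sum[OF gK_subgrp], rule ballI)
      fix i assume "i \<in> {..k}"
      then have "i + (k - i) = k" by simp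
      moreover have "hp i x * hp (k - i) y \<in> gK (i + (k - i))" by (rule gK_mul[OF hp_in hp_in])
      ultimately show "hp i x * hp (k - i) y \<in> gK k" by simp
    qed
  qed
  have g0: "\<forall>k\<ge>2 * N0. g k = 0"
  proof (intro allI impI)
    fix k assume k: "k \<ge> 2 * N0"
    have "hp i x * hp (k - i) y = 0" if "i \<le> k" for i
    proof (cases "i \<ge> N0")
      case True then show ?thesis by (simp add: hp_N0)
    next
      case False then have "k - i \<ge> N0" using k by linarith
      then show ?thesis by (simp add: hp_N0)
    qed
    then show "g k = 0" unfolding g_def by simp
  qed
  have "x * y = (\<Sum>i<N0. hp i x) * (\<Sum>j<N0. hp j y)"
    using hp_expand[of x] hp_expand[of y] by simp
  also have "\<dots> = (\<Sum>i<N0. \<Sum>j<N0. hp i x * hp j y)" by (rule sum_product)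
  also have "\<dots> = (\<Sum>(i, j)\<in>{..<N0} \<times> {..<N0}. hp i x * hp j y)" by (rule sum.cartesian_product)
  also have "\<dots> = (\<Sum>(i, j)\<in>{(i, j). i + j < 2 * N0}. hp i x * hp j y)"
  proof (rule sum.mono_neutral_left)
    show "finite {(i, j). i + j < 2 * N0}"
      by (rule finite_subset[of _ "{..<2*N0} \<times> {..<2*N0}"]) auto
    show "{..<N0} \<times> {..<N0} \<subseteq> {(i, j). i + j < 2 * N0}" by auto
    show "\<forall>p\<in>{(i, j). i + j < 2 * N0} - {..<N0} \<times> {..<N0}. (case p of (i, j) \<Rightarrow> hp i x * hp j y) = 0"
    proof
      fix p assume "p \<in> {(i, j). i + j < 2 * N0} - {..<N0} \<times> {..<N0}"
      then obtain i j where p: "p = (i, j)" and ij: "\<not> (i < N0 \<and> j < N0)" by auto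
      then have "hp i x = 0 \<or> hp j y = 0" using hp_N0 by (auto simp: not_less)
      then show "(case p of (i, j) \<Rightarrow> hp i x * hp j y) = 0" using p by auto
    qed
  qed
  also have "\<dots> = (\<Sum>k<2 * N0. g k)" unfolding g_def by (rule sum.triangle_reindex)
  finally have "x * y = (\<Sum>k<2 * N0. g k)" .
  then have "hp n (x * y) = g n" using gin g0 by (intro hp_unique_bd) auto
  then show ?thesis unfolding g_def .
qed

end




context tg
begin

definition P :: "nat \<Rightarrow> 'a set" where
  "P r = {x. \<forall>i<r. hp i x = 0}"

lemma P_subgrp: "subgrp (P r)"
  unfolding subgrp_def P_def by (simp add: hp_zero hp_add hp_neg)

lemma P_0: "P 0 = UNIV"
  unfolding P_def by simp

lemma P_anti: "r \<le> s \<Longrightarrow> P s \<subseteq> P r"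
  unfolding P_def by auto

lemma P_N0: "P N0 = {0}"
proof
  show "P N0 \<subseteq> {0}"
  proof
    fix x assume "x \<in> P N0"
    then have "\<forall>i<N0. hp i x = 0" unfolding P_def by simp
    then have "x = (\<Sum>n<N0. 0)" using hp_expand[of x] by simp
    then show "x \<in> {0}" by simp
  qed
  show "{0} \<subseteq> P N0" using subgrpD(1)[OF P_subgrp] by simp
qed

lemma P_zero: "n \<ge> N0 \<Longrightarrow> x \<in> P n \<Longrightarrow> x = 0"
  using P_anti[of N0 n] P_N0 by auto

lemma P_mul: "x \<in> P p \<Longrightarrow> y \<in> P q \<Longrightarrow> x * y \<in> P (p + q)"
proof -
  assume x: "x \<in> P p" and y: "y \<in> P q"
  have "hp n (x * y) = 0" if n: "n < p + q" for n
  proof -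
    have "hp i x * hp (n - i) y = 0" if i: "i \<le> n" for i
    proof (cases "i < p")
      case True then show ?thesis using x unfolding P_def by simp
    next
      case False then have "n - i < q" using n i by arith
      then show ?thesis using y unfolding P_def by simp
    qed
    then show ?thesis by (simp add: hp_mul)
  qed
  then show ?thesis unfolding P_def by simp
qed

lemma P_sc: "x \<in> P r \<Longrightarrow> sc c x \<in> P r"
  unfolding P_def by (simp add: hp_sc vs_zero_right[OF vs])

lemma gK_P: "x \<in> gK n \<Longrightarrow> r \<le> n \<Longrightarrow> x \<in> P r"
  unfolding P_def by (simp add: hp_homog)

lemma P_expand: "x \<in> P r \<Longrightarrow> x = (\<Sum>n\<in>{r..<N0}. hp n x)"
proof -
  assume x: "x \<in> P r"
  have "x = (\<Sum>n<N0. hp n x)" by (rule hp_expand)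
  also have "\<dots> = (\<Sum>n\<in>{r..<N0}. hp n x)"
    by (rule sum.mono_neutral_right) (use x in \<open>auto simp: P_def\<close>)
  finally show ?thesis .
qed

lemma sumge_gK: "sumge gK r = P r"
proof
  show "sumge gK r \<subseteq> P r"
  proof
    fix x assume "x \<in> sumge gK r"
    then obtain F f where x: "x = sum f F" "\<forall>i\<in>F. r \<le> i \<and> f i \<in> gK i"
      unfolding sumge_def by blast
    show "x \<in> P r" unfolding x(1)
      by (rule subgrp_sum[OF P_subgrp]) (use x(2) gK_P in blast)
  qed
  show "P r \<subseteq> sumge gK r"
  proof
    fix x assume "x \<in> P r"
    then have "x = (\<Sum>n\<in>{r..<N0}. hp n x)" by (rule P_expand)
    moreover have "\<forall>i\<in>{r..<N0}. r \<le> i \<and> hp i x \<in> gK i" using hp_in by auto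
    ultimately show "x \<in> sumge gK r"
      unfolding sumge_def by (intro CollectI exI[of _ "{r..<N0}"] exI[of _ "\<lambda>n. hp n x"]) simp
  qed
qed

lemma geom: "(\<Sum>k<n. w ^ k) * (1 - w) = 1 - (w::'a) ^ n"
proof (induction n)
  case 0 then show ?case by simp
next
  case (Suc n)
  have "(\<Sum>k<Suc n. w ^ k) * (1 - w) = (\<Sum>k<n. w ^ k) * (1 - w) + w ^ n * (1 - w)"
    by (simp add: distrib_right)
  also have "\<dots> = 1 - w ^ n + (w ^ n - w ^ n * w)" using Suc by (simp add: right_diff_distrib)
  also have "\<dots> = 1 - w ^ Suc n" by (simp add: power_commutes)
  finally show ?case .
qed

lemma pow_P: "w \<in> P 1 \<Longrightarrow> w ^ k \<in> P k"
proof (induction k)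
  case 0 then show ?case by (simp add: P_0)
next
  case (Suc k)
  then have "w * w ^ k \<in> P (1 + k)" by (intro P_mul) auto
  then show ?case by simp
qed

lemma jrad_eq: "jrad = P 1"
proof
  show "jrad \<subseteq> P 1"
  proof
    fix x :: 'a assume x: "x \<in> jrad"
    have ss: "semisimple_sub (gK 0)" using tgr unfolding tight_grading_def by blast
    have "hp 0 x \<in> gK 0" by (rule hp_in)
    moreover have "\<forall>y\<in>gK 0. \<exists>z\<in>gK 0. z * (1 - y * hp 0 x) = 1"
    proof
      fix y assume y: "y \<in> gK 0"
      obtain z where z: "z * (1 - y * x) = 1" using x unfolding jrad_def by blast
      have "hp 0 (z * (1 - y * x)) = hp 0 1" using z by simp
      moreover have "hp 0 (z * (1 - y * x)) = hp 0 z * (1 - y * hp 0 x)"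
        using hp_homog[OF y, of 0] by (simp add: hp_mul hp_diff hp_one)
      ultimately have "hp 0 z * (1 - y * hp 0 x) = 1" by (simp add: hp_one)
      then show "\<exists>z\<in>gK 0. z * (1 - y * hp 0 x) = 1" using hp_in by blast
    qed
    ultimately have "hp 0 x = 0" using ss unfolding semisimple_sub_def by blast
    then show "x \<in> P 1" unfolding P_def by simp
  qed
  show "P 1 \<subseteq> jrad"
  proof
    fix x assume x: "x \<in> P 1"
    have "\<exists>z. z * (1 - y * x) = 1" for y
    proof -
      have "y * x \<in> P (0 + 1)" using x by (intro P_mul) (auto simp: P_0)
      then have "(y * x) ^ N0 \<in> P N0" using pow_P by simp
      then have "(y * x) ^ N0 = 0" using P_N0 by simp
      then have "(\<Sum>k<N0. (y * x) ^ k) * (1 - y * x) = 1" using geom[where n=N0 and w="y * x"] by simp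
      then show ?thesis by blast
    qed
    then show "x \<in> jrad" unfolding jrad_def by blast
  qed
qed

definition T :: "nat \<Rightarrow> 'a set" where
  "T n = addspan {a * b | a b. a \<in> gK 1 \<and> b \<in> gK (n - 1)}"

lemma gen_T:
  assumes "x \<in> alg_gen sc (gK 0 \<union> gK 1)"
  shows "\<forall>n\<ge>1. hp n x \<in> T n"
  using assms
proof (induction rule: alg_gen.induct)
  case (ag_base x)
  show ?case
  proof (intro allI impI)
    fix n :: nat assume n: "n \<ge> 1"
    show "hp n x \<in> T n"
    proof (cases "x \<in> gK 0")
      case True then have "hp n x = 0" using n by (simp add: hp_homog)
      then show ?thesis unfolding T_def by (simp add: addspan.as_zero)
    next
      case False
      then have x1: "x \<in> gK 1" using ag_base by blast
      show ?thesis
      proof (cases "n = 1")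
        case True
        then have "hp n x = x * 1" using x1 by (simp add: hp_homog)
        moreover have "x * 1 \<in> {a * b | a b. a \<in> gK 1 \<and> b \<in> gK (n - 1)}"
        proof -
          have "1 \<in> gK (n - 1)" using one_gK True by simp
          then show ?thesis using x1 by blast
        qed
        ultimately show ?thesis unfolding T_def by (simp add: addspan.as_base)
      next
        case False then have "hp n x = 0" using x1 by (simp add: hp_homog)
        then show ?thesis unfolding T_def by (simp add: addspan.as_zero)
      qed
    qed
  qed
next
  case ag_one
  then show ?case unfolding T_def by (simp add: hp_one addspan.as_zero)
next
  case (ag_sc x c)
  show ?case
  proof (intro allI impI)
    fix n :: nat assume n: "n \<ge> 1"
    have "sc c (hp n x) \<in> T n" unfolding T_def
    proof (rule addspan_map[where f = "sc c"])
      show "sc c (u + v) = sc c u + sc c v" for u v by (rule vs_simps(4)[OF vs])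
      show "hp n x \<in> addspan {a * b | a b. a \<in> gK 1 \<and> b \<in> gK (n - 1)}"
        using ag_sc n unfolding T_def by blast
      fix z assume "z \<in> {a * b | a b. a \<in> gK 1 \<and> b \<in> gK (n - 1)}"
      then obtain a b where z: "z = a * b" "a \<in> gK 1" "b \<in> gK (n - 1)" by blast
      then have "sc c z = sc c a * b" "sc c a \<in> gK 1" by (simp_all add: sc_mul1 gK_sc)
      then show "sc c z \<in> addspan {a * b | a b. a \<in> gK 1 \<and> b \<in> gK (n - 1)}"
        using z(3) by (intro addspan.as_base) blast
    qed
    then show "hp n (sc c x) \<in> T n" by (simp add: hp_sc)
  qed
next
  case (ag_add x y)
  show ?case
  proof (intro allI impI)
    fix n :: nat assume n: "n \<ge> 1"
    have "hp n x \<in> T n" "hp n y \<in> T n" using ag_add.IH n by auto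
    then have "hp n x + hp n y \<in> T n" unfolding T_def by (rule addspan.as_add)
    then show "hp n (x + y) \<in> T n" by (simp only: hp_add)
  qed
next
  case (ag_mul x y)
  show ?case
  proof (intro allI impI)
    fix n :: nat assume n: "n \<ge> 1"
    have "hp i x * hp (n - i) y \<in> T n" if i: "i \<le> n" for i
    proof (cases "i = 0")
      case True
      have "hp 0 x * hp n y \<in> T n" unfolding T_def
      proof (rule addspan_map[where f = "\<lambda>z. hp 0 x * z"])
        show "hp 0 x * (u + v) = hp 0 x * u + hp 0 x * v" for u v by (simp add: distrib_left)
        show "hp n y \<in> addspan {a * b | a b. a \<in> gK 1 \<and> b \<in> gK (n - 1)}"
          using ag_mul n unfolding T_def by blast
        fix z assume "z \<in> {a * b | a b. a \<in> gK 1 \<and> b \<in> gK (n - 1)}"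
        then obtain a b where z: "z = a * b" "a \<in> gK 1" "b \<in> gK (n - 1)" by blast
        have "hp 0 x * a \<in> gK (0 + 1)" by (rule gK_mul[OF hp_in z(2)])
        moreover have "hp 0 x * z = (hp 0 x * a) * b" using z(1) by (simp add: mult.assoc)
        ultimately show "hp 0 x * z \<in> addspan {a * b | a b. a \<in> gK 1 \<and> b \<in> gK (n - 1)}"
          using z(3) by (intro addspan.as_base) auto
      qed
      then show ?thesis using True by simp
    next
      case False
      then have i1: "i \<ge> 1" by simp
      show ?thesis unfolding T_def
      proof (rule addspan_map[where f = "\<lambda>z. z * hp (n - i) y"])
        show "(u + v) * hp (n - i) y = u * hp (n - i) y + v * hp (n - i) y" for u v
          by (simp add: distrib_right)
        show "hp i x \<in> addspan {a * b | a b. a \<in> gK 1 \<and> b \<in> gK (i - 1)}"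
          using ag_mul i1 unfolding T_def by blast
        fix z assume "z \<in> {a * b | a b. a \<in> gK 1 \<and> b \<in> gK (i - 1)}"
        then obtain a b where z: "z = a * b" "a \<in> gK 1" "b \<in> gK (i - 1)" by blast
        have "b * hp (n - i) y \<in> gK (i - 1 + (n - i))" by (rule gK_mul[OF z(3) hp_in])
        moreover have "i - 1 + (n - i) = n - 1" using i i1 by simp
        moreover have "z * hp (n - i) y = a * (b * hp (n - i) y)" using z(1) by (simp add: mult.assoc)
        ultimately show "z * hp (n - i) y \<in> addspan {a * b | a b. a \<in> gK 1 \<and> b \<in> gK (n - 1)}"
          using z(2) by (intro addspan.as_base) auto
      qed
    qed
    then have "(\<Sum>i\<le>n. hp i x * hp (n - i) y) \<in> T n"
      unfolding T_def by (intro addspan_sum) auto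
    then show "hp n (x * y) \<in> T n" by (simp only: hp_mul)
  qed
qed

lemma gK_T: "g \<in> gK n \<Longrightarrow> n \<ge> 1 \<Longrightarrow> g \<in> T n"
proof -
  assume g: "g \<in> gK n" and n: "n \<ge> 1"
  have "g \<in> alg_gen sc (gK 0 \<union> gK 1)" using tgr unfolding tight_grading_def by blast
  then have "hp n g \<in> T n" using gen_T n by blast
  then show ?thesis using g by (simp add: hp_homog)
qed

lemma idpow_eq: "idpow jrad r = P r"
proof (induction r)
  case 0 then show ?case by (simp add: P_0)
next
  case (Suc r)
  have "idpow jrad (Suc r) = addspan {x * y | x y. x \<in> P 1 \<and> y \<in> P r}"
    using Suc by (simp add: jrad_eq)
  also have "\<dots> = P (Suc r)"
  proof
    show "addspan {x * y | x y. x \<in> P 1 \<and> y \<in> P r} \<subseteq> P (Suc r)"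
    proof (rule addspan_sub[OF P_subgrp], rule subsetI)
      fix z assume "z \<in> {x * y | x y. x \<in> P 1 \<and> y \<in> P r}"
      then obtain a b where "z = a * b" "a \<in> P 1" "b \<in> P r" by blast
      then show "z \<in> P (Suc r)" using P_mul[of a 1 b r] by simp
    qed
    show "P (Suc r) \<subseteq> addspan {x * y | x y. x \<in> P 1 \<and> y \<in> P r}"
    proof
      fix x assume x: "x \<in> P (Suc r)"
      have "hp n x \<in> addspan {x * y | x y. x \<in> P 1 \<and> y \<in> P r}" if n: "n \<in> {Suc r..<N0}" for n
      proof -
        have "hp n x \<in> T n" using gK_T[OF hp_in] n by simp
        moreover have "{a * b | a b. a \<in> gK 1 \<and> b \<in> gK (n - 1)} \<subseteq> {x * y | x y. x \<in> P 1 \<and> y \<in> P r}"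
        proof
          fix z assume "z \<in> {a * b | a b. a \<in> gK 1 \<and> b \<in> gK (n - 1)}"
          then obtain a b where ab: "z = a * b" "a \<in> gK 1" "b \<in> gK (n - 1)" by blast
          have "a \<in> P 1" using gK_P[OF ab(2)] by simp
          moreover have "r \<le> n - 1" using n by auto
          then have "b \<in> P r" using gK_P[OF ab(3)] by blast
          ultimately show "z \<in> {x * y | x y. x \<in> P 1 \<and> y \<in> P r}" using ab(1) by blast
        qed
        ultimately show ?thesis unfolding T_def using addspan_mono by blast
      qed
      then have "(\<Sum>n\<in>{Suc r..<N0}. hp n x) \<in> addspan {x * y | x y. x \<in> P 1 \<and> y \<in> P r}"
        by (intro addspan_sum) auto
      then show "x \<in> addspan {x * y | x y. x \<in> P 1 \<and> y \<in> P r}" using P_expand[OF x] by simp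
    qed
  qed
  finally show ?case .
qed

end




lemma smul_coset:
  assumes S: "subgrp S" and fS: "\<And>u. u \<in> S \<Longrightarrow> f u \<in> S" and fadd: "\<And>u v. f (u + v) = f u + f v"
  shows "{f z + w | z w. z \<in> coset S a \<and> w \<in> S} = coset S (f a)"
proof (rule set_eqI)
  fix v
  show "v \<in> {f z + w | z w. z \<in> coset S a \<and> w \<in> S} \<longleftrightarrow> v \<in> coset S (f a)"
  proof
    assume "v \<in> {f z + w | z w. z \<in> coset S a \<and> w \<in> S}"
    then obtain z w where v: "v = f z + w" and z: "z - a \<in> S" and w: "w \<in> S"
      unfolding mem_coset by blast
    have "f z = f (z - a) + f a" using fadd[of "z - a" a] by simp
    then have "v - f a = f (z - a) + w" using v by (simp add: algebra_simps)
    moreover have "f (z - a) + w \<in> S" using subgrpD(2)[OF S fS[OF z] w] .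
    ultimately show "v \<in> coset S (f a)" unfolding mem_coset by simp
  next
    assume "v \<in> coset S (f a)"
    then have w: "v - f a \<in> S" unfolding mem_coset .
    have z: "a \<in> coset S a" unfolding mem_coset using subgrpD(1)[OF S] by simp
    have "v = f a + (v - f a)" by simp
    then show "v \<in> {f z + w | z w. z \<in> coset S a \<and> w \<in> S}" using z w by blast
  qed
qed

locale tga = tg sc gK for sc :: "'k::field \<Rightarrow> 'a::ring_1 \<Rightarrow> 'a" and gK +
  fixes Ov :: "'k set" and A :: "'a set" and aa :: "nat \<Rightarrow> 'a set"
  assumes dvr: "dvr Ov" and A1: "1 \<in> A" and Amul: "\<forall>x\<in>A. \<forall>y\<in>A. x * y \<in> A"
    and Aspan: "\<exists>B. A = lspan sc Ov B"
    and aasub: "\<forall>r. submod sc Ov (aa r)" and aads: "graded_ds aa A"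
    and aaK: "\<forall>r. lspan sc UNIV (aa r) = gK r"
begin

lemma Ov: "1 \<in> Ov" "x \<in> Ov \<Longrightarrow> y \<in> Ov \<Longrightarrow> x + y \<in> Ov" "x \<in> Ov \<Longrightarrow> y \<in> Ov \<Longrightarrow> x * y \<in> Ov"
  "x \<in> Ov \<Longrightarrow> - x \<in> Ov"
  using dvr unfolding dvr_def by blast+

lemma Ov_m1: "-1 \<in> Ov" using Ov(1,4) by blast

lemma Ov_0: "0 \<in> Ov" using Ov(2)[OF Ov(1) Ov_m1] by simp

lemma A_add: "x \<in> A \<Longrightarrow> y \<in> A \<Longrightarrow> x + y \<in> A"
  using Aspan lspan_add[OF vs Ov_0] Ov(2) by blast

lemma A_sc: "c \<in> Ov \<Longrightarrow> x \<in> A \<Longrightarrow> sc c x \<in> A"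
  using Aspan lspan_sc[OF vs] Ov(3) by blast

lemma A_subgrp: "subgrp A"
proof -
  have "0 \<in> A" using A_sc[OF Ov_0 A1] vs_zero_left[OF vs] by simp
  moreover have "\<forall>x\<in>A. - x \<in> A" using A_sc[OF Ov_m1] vs_neg_one[OF vs] by metis
  ultimately show ?thesis unfolding subgrp_def using A_add by blast
qed

lemma A_mul: "x \<in> A \<Longrightarrow> y \<in> A \<Longrightarrow> x * y \<in> A" using Amul by blast

lemma aa_A: "aa r \<subseteq> A" using aads unfolding graded_ds_def by blast

lemma aa_gK: "aa r \<subseteq> gK r"
  using lspan_base[OF vs, of UNIV _ "aa r"] aaK by blast

lemma hp_A: "x \<in> A \<Longrightarrow> hp n x \<in> aa n"
proof -
  assume x: "x \<in> A"
  then obtain f where f: "\<forall>n. f n \<in> aa n" "finite {n. f n \<noteq> 0}" "x = sum f {n. f n \<noteq> 0}"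
    using aads unfolding graded_ds_def by blast
  have "hp n x = f n" by (rule hp_unique) (use f aa_gK in auto)
  then show ?thesis using f(1) by simp
qed

lemma hp_A': "x \<in> A \<Longrightarrow> hp n x \<in> A" using hp_A aa_A by blast

lemma partA1: "aa r = A \<inter> gK r"
proof
  show "aa r \<subseteq> A \<inter> gK r" using aa_A aa_gK by blast
  show "A \<inter> gK r \<subseteq> aa r"
  proof
    fix x assume "x \<in> A \<inter> gK r"
    then have "hp r x \<in> aa r" "hp r x = x" using hp_A hp_homog by auto
    then show "x \<in> aa r" by simp
  qed
qed

lemma ratil_eq: "ratil A r = A \<inter> P r"
  unfolding ratil_def by (simp add: idpow_eq)

lemma partA2: "sumge aa r = A \<inter> P r"
proof
  show "sumge aa r \<subseteq> A \<inter> P r"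
  proof
    fix x assume "x \<in> sumge aa r"
    then obtain F f where x: "x = sum f F" "\<forall>i\<in>F. r \<le> i \<and> f i \<in> aa i"
      unfolding sumge_def by blast
    show "x \<in> A \<inter> P r" unfolding x(1)
      by (rule subgrp_sum[OF subgrp_Int[OF A_subgrp P_subgrp]]) (use x(2) gK_P aa_A aa_gK in blast)
  qed
  show "A \<inter> P r \<subseteq> sumge aa r"
  proof
    fix x assume x: "x \<in> A \<inter> P r"
    then have "x = (\<Sum>n\<in>{r..<N0}. hp n x)" using P_expand by blast
    moreover have "\<forall>i\<in>{r..<N0}. r \<le> i \<and> hp i x \<in> aa i" using hp_A x by auto
    ultimately show "x \<in> sumge aa r"
      unfolding sumge_def by (intro CollectI exI[of _ "{r..<N0}"] exI[of _ "\<lambda>n. hp n x"]) simp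
  qed
qed

abbreviation F :: "nat \<Rightarrow> 'a set" where "F \<equiv> ratil A"

lemma F_subgrp: "subgrp (F r)"
  unfolding ratil_eq by (rule subgrp_Int[OF A_subgrp P_subgrp])

lemma hp_F: "x \<in> A \<Longrightarrow> hp r x \<in> F r"
  unfolding ratil_eq using hp_A' gK_P[OF hp_in] by blast

definition phi :: "'a \<Rightarrow> nat \<Rightarrow> 'a set" where
  "phi x = (\<lambda>r. coset (F (Suc r)) (hp r x))"

lemma phi_grcar: "x \<in> A \<Longrightarrow> phi x \<in> grcar F"
proof -
  assume x: "x \<in> A"
  have "{r. phi x r \<noteq> F (Suc r)} \<subseteq> {..<N0}"
  proof
    fix r assume "r \<in> {r. phi x r \<noteq> F (Suc r)}"
    then have "hp r x \<noteq> 0" unfolding phi_def by (auto simp: coset_zero)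
    then show "r \<in> {..<N0}" using hp_N0 by (auto simp: not_less[symmetric])
  qed
  then have "finite {r. phi x r \<noteq> F (Suc r)}" by (rule finite_subset) simp
  moreover have "\<forall>r. \<exists>y\<in>F r. phi x r = coset (F (Suc r)) y"
    unfolding phi_def using hp_F[OF x] by blast
  ultimately show ?thesis unfolding grcar_def by blast
qed

lemma phi_inj: "inj_on phi A"
proof (rule inj_onI)
  fix x y assume x: "x \<in> A" and y: "y \<in> A" and e: "phi x = phi y"
  have "hp r x = hp r y" for r
  proof -
    have "coset (F (Suc r)) (hp r x) = coset (F (Suc r)) (hp r y)"
      using e unfolding phi_def by meson
    then have "hp r x - hp r y \<in> F (Suc r)" using coset_eq_iff[OF F_subgrp] by blast
    then have "hp r (hp r x - hp r y) = 0" unfolding ratil_eq P_def by simp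
    moreover have "hp r x - hp r y \<in> gK r" using subgrpD(4)[OF gK_subgrp hp_in hp_in] .
    ultimately show ?thesis by (simp add: hp_homog)
  qed
  then show "x = y" using hp_expand[of x] hp_expand[of y] by simp
qed

lemma phi_surj: "c \<in> grcar F \<Longrightarrow> \<exists>y\<in>A. phi y = c"
proof -
  assume "c \<in> grcar F"
  then have "\<forall>r. \<exists>x\<in>F r. c r = coset (F (Suc r)) x" unfolding grcar_def by blast
  then obtain xr where xr: "\<forall>r. xr r \<in> F r \<and> c r = coset (F (Suc r)) (xr r)"
    by metis
  define y where "y = (\<Sum>n<N0. hp n (xr n))"
  have xrA: "xr r \<in> A" "xr r \<in> P r" for r using xr unfolding ratil_eq by auto
  have yA: "y \<in> A" unfolding y_def
    by (rule subgrp_sum[OF A_subgrp]) (use hp_A' xrA in blast)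
  have hpy: "hp m y = hp m (xr m)" for m
    by (rule hp_unique_bd[where N = N0]) (use hp_in hp_N0 y_def in auto)
  have "phi y r = c r" for r
  proof -
    have "hp r (xr r) - xr r \<in> P (Suc r)"
    proof -
      have "hp i (hp r (xr r) - xr r) = 0" if "i < Suc r" for i
      proof (cases "i = r")
        case True then show ?thesis by (simp add: hp_diff hp_homog[OF hp_in])
      next
        case False
        then have "i < r" using that by simp
        then show ?thesis using xrA(2)[of r] unfolding P_def by (simp add: hp_diff hp_homog[OF hp_in])
      qed
      then show ?thesis unfolding P_def by simp
    qed
    moreover have "hp r (xr r) - xr r \<in> A" using subgrpD(4)[OF A_subgrp hp_A' xrA(1)] xrA(1) by blast
    ultimately have "hp r (xr r) - xr r \<in> F (Suc r)" unfolding ratil_eq by blast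
    then have "coset (F (Suc r)) (hp r (xr r)) = coset (F (Suc r)) (xr r)"
      using coset_eq_iff[OF F_subgrp] by blast
    then show ?thesis unfolding phi_def using xr hpy by simp
  qed
  then show ?thesis using yA by blast
qed

lemma phi_bij: "bij_betw phi A (grcar F)"
  unfolding bij_betw_def using phi_inj phi_grcar phi_surj by blast

lemma phi_add: "phi (x + y) = gradd F (phi x) (phi y)"
  unfolding phi_def gradd_def by (rule ext) (simp add: hp_add coset_add[OF F_subgrp])

lemma F_mul: "a \<in> F p \<Longrightarrow> b \<in> F q \<Longrightarrow> a * b \<in> F (p + q)"
  unfolding ratil_eq using A_mul P_mul by blast

lemma F_anti: "p \<le> q \<Longrightarrow> F q \<subseteq> F p"
  unfolding ratil_eq using P_anti by blast

lemma phi_mul: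
  assumes x: "x \<in> A" and y: "y \<in> A"
  shows "phi (x * y) = grmul F (phi x) (phi y)"
proof (rule ext)
  fix n
  have "grmul F (phi x) (phi y) n = coset (F (Suc n)) (\<Sum>i\<le>n. hp i x * hp (n - i) y)"
    unfolding grmul_def
  proof (rule gract_coset[where x = "\<lambda>i. hp i x" and y = "\<lambda>i. hp (n - i) y"])
    show "(a + b) * m = a * m + b * m" for a b m :: 'a by (simp add: distrib_right)
    show "a * (m + k) = a * m + a * k" for a m k :: 'a by (simp add: distrib_left)
    show "subgrp (F (Suc n))" "\<And>i. subgrp (F i)" "\<And>j. subgrp (F j)" using F_subgrp by auto
    show "\<And>i. i \<le> n \<Longrightarrow> phi x i = coset (F (Suc i)) (hp i x)" unfolding phi_def by simp
    show "\<And>i. i \<le> n \<Longrightarrow> phi y (n - i) = coset (F (Suc (n - i))) (hp (n - i) y)" unfolding phi_def by simp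
  next
    fix i a b assume i: "i \<le> n" and a: "a \<in> F (Suc i)" and b: "b \<in> coset (F (Suc (n - i))) (hp (n - i) y)"
    have "b - hp (n - i) y \<in> F (Suc (n - i))" using b unfolding mem_coset .
    then have "b - hp (n - i) y \<in> F (n - i)" using F_anti[of "n - i" "Suc (n - i)"] by auto
    then have "(b - hp (n - i) y) + hp (n - i) y \<in> F (n - i)"
      using subgrpD(2)[OF F_subgrp _ hp_F[OF y]] by blast
    then have "b \<in> F (n - i)" by simp
    then have "a * b \<in> F (Suc i + (n - i))" using F_mul a by blast
    then show "a * b \<in> F (Suc n)" using i by (simp add: Suc_diff_le)
  next
    fix i b assume i: "i \<le> n" and b: "b \<in> F (Suc (n - i))"
    have "hp i x * b \<in> F (i + Suc (n - i))" using F_mul[OF hp_F[OF x] b] .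
    then show "hp i x * b \<in> F (Suc n)" using i by simp
  qed
  then show "phi (x * y) n = grmul F (phi x) (phi y) n"
    unfolding phi_def by (simp add: hp_mul)
qed

lemma phi_one: "phi 1 = grone F"
  unfolding phi_def grone_def by (rule ext) (simp add: hp_one)

lemma phi_sc: "c \<in> Ov \<Longrightarrow> x \<in> A \<Longrightarrow> phi (sc c x) = grsmul sc F c (phi x)"
proof (rule ext)
  fix r assume c: "c \<in> Ov"
  have "grsmul sc F c (phi x) r = coset (F (Suc r)) (sc c (hp r x))"
    unfolding grsmul_def phi_def
  proof (rule smul_coset[OF F_subgrp])
    show "u \<in> F (Suc r) \<Longrightarrow> sc c u \<in> F (Suc r)" for u
      unfolding ratil_eq using A_sc[OF c] P_sc by blast
    show "sc c (u + v) = sc c u + sc c v" for u v by (rule vs_simps(4)[OF vs])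
  qed
  then show "phi (sc c x) r = grsmul sc F c (phi x) r"
    unfolding phi_def by (simp add: hp_sc)
qed

lemma phi_single: "x \<in> aa r \<Longrightarrow> phi x = grsingle F r x"
proof (rule ext)
  fix n assume "x \<in> aa r"
  then have "x \<in> gK r" using aa_gK by blast
  then have h: "hp n x = (if n = r then x else 0)" by (rule hp_homog)
  show "phi x n = grsingle F r x n"
    unfolding phi_def grsingle_def h by (simp add: coset_zero)
qed

end




lemma grcarI:
  fixes G :: "nat \<Rightarrow> 'v::ab_group_add set"
  assumes "\<forall>r. \<exists>y\<in>G r. c r = coset (G (Suc r)) y" and "\<forall>r\<ge>N. \<forall>y\<in>G r. y = 0"
  shows "c \<in> grcar G"
proof -
  have "{r. c r \<noteq> G (Suc r)} \<subseteq> {..<N}"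
  proof
    fix r assume r: "r \<in> {r. c r \<noteq> G (Suc r)}"
    show "r \<in> {..<N}"
    proof (rule ccontr)
      assume "r \<notin> {..<N}"
      then have "r \<ge> N" by simp
      moreover obtain y where y: "y \<in> G r" "c r = coset (G (Suc r)) y" using assms(1) by blast
      ultimately have "y = 0" using assms(2) by blast
      then have "c r = G (Suc r)" using y(2) by (simp add: coset_zero)
      then show False using r by simp
    qed
  qed
  then have "finite {r. c r \<noteq> G (Suc r)}" by (rule finite_subset) simp
  then show ?thesis unfolding grcar_def using assms(1) by blast
qed

lemma grcar_reps:
  assumes "c \<in> grcar G"
  obtains ys where "\<And>r. ys r \<in> G r" "\<And>r. c r = coset (G (Suc r)) (ys r)"
proof -
  have "\<forall>r. \<exists>y. y \<in> G r \<and> c r = coset (G (Suc r)) y" using assms unfolding grcar_def by blast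
  then have "\<exists>ys. \<forall>r. ys r \<in> G r \<and> c r = coset (G (Suc r)) (ys r)" by (rule choice)
  then obtain ys where "\<forall>r. ys r \<in> G r \<and> c r = coset (G (Suc r)) (ys r)" by blast
  then show ?thesis using that by blast
qed

lemma grsingle_coset:
  "grsingle G k a = (\<lambda>n. coset (G (Suc n)) (if n = k then a else (0::'v::ab_group_add)))"
  unfolding grsingle_def by (rule ext) (simp add: coset_zero)

lemma gradd_coset:
  assumes "\<And>n. subgrp (G (Suc n))"
  shows "gradd G (\<lambda>n. coset (G (Suc n)) (a n)) (\<lambda>n. coset (G (Suc n)) (b n))
       = (\<lambda>n. coset (G (Suc n)) (a n + b n))"
  unfolding gradd_def by (rule ext) (rule coset_add[OF assms])

locale tgm = tga sc gK Ov A aa for sc :: "'k::field \<Rightarrow> 'a::ring_1 \<Rightarrow> 'a" and gK Ov A aa +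
  fixes scm :: "'k \<Rightarrow> 'm::ab_group_add \<Rightarrow> 'm" and act :: "'a \<Rightarrow> 'm \<Rightarrow> 'm" and M :: "'m set"
  assumes kmod: "kmod sc scm act" and lat: "is_lattice Ov scm act A M"
begin

lemma vsm: "vs_axioms scm" using kmod unfolding kmod_def by blast

lemma act_one: "act 1 m = m" using kmod unfolding kmod_def by blast
lemma act_mul: "act (x * y) m = act x (act y m)" using kmod unfolding kmod_def by blast
lemma act_addl: "act (x + y) m = act x m + act y m" using kmod unfolding kmod_def by blast
lemma act_addr: "act x (m + n) = act x m + act x n" using kmod unfolding kmod_def by blast

lemma act_zerol: "act 0 m = 0" using act_addl[of 0 0 m] by simp
lemma act_zeror: "act x 0 = 0" using act_addr[of x 0 0] by simp
lemma act_negl: "act (- x) m = - act x m"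
proof -
  have "act (- x) m + act x m = 0" using act_addl[of "-x" x m] act_zerol by simp
  then show ?thesis by (simp add: eq_neg_iff_add_eq_0)
qed

lemma M_subgrp: "subgrp M"
  using lat submod_subgrp[OF vsm _ Ov_m1] unfolding is_lattice_def by blast

lemma M_act: "x \<in> A \<Longrightarrow> m \<in> M \<Longrightarrow> act x m \<in> M"
  using lat unfolding is_lattice_def by blast

abbreviation R :: "nat \<Rightarrow> 'm set" where "R \<equiv> radM act M"

definition X :: "nat \<Rightarrow> 'm set" where "X r = {act x m | x m. x \<in> P r}"

lemma R_eq: "R r = M \<inter> addspan (X r)"
  unfolding radM_def X_def by (simp add: idpow_eq)

definition Nn :: "nat \<Rightarrow> 'm set" where
  "Nn r = addspan {act x m | x m. x \<in> sumge aa r \<and> m \<in> M}"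

lemma Nn_eq: "Nn r = addspan {act x m | x m. x \<in> A \<inter> P r \<and> m \<in> M}"
  unfolding Nn_def partA2 ..

lemma R_subgrp: "subgrp (R r)"
  unfolding R_eq by (rule subgrp_Int[OF M_subgrp subgrp_addspan])

lemma Nn_subgrp: "subgrp (Nn r)"
  unfolding Nn_def by (rule subgrp_addspan)

lemma R_anti: "p \<le> q \<Longrightarrow> R q \<subseteq> R p"
proof -
  assume "p \<le> q"
  then have "X q \<subseteq> X p" unfolding X_def using P_anti by blast
  then show ?thesis unfolding R_eq using addspan_mono by blast
qed

lemma Nn_anti: "p \<le> q \<Longrightarrow> Nn q \<subseteq> Nn p"
proof -
  assume "p \<le> q"
  then have "{act x m | x m. x \<in> A \<inter> P q \<and> m \<in> M} \<subseteq> {act x m | x m. x \<in> A \<inter> P p \<and> m \<in> M}"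
    using P_anti by blast
  then show ?thesis unfolding Nn_eq using addspan_mono by blast
qed

lemma R_0: "R 0 = M"
proof -
  have "M \<subseteq> addspan (X 0)"
  proof
    fix m assume "m \<in> M"
    have "act 1 m \<in> X 0" unfolding X_def P_0 by blast
    then have "act 1 m \<in> addspan (X 0)" by (rule addspan.as_base)
    then show "m \<in> addspan (X 0)" by (simp add: act_one)
  qed
  then show ?thesis unfolding R_eq by blast
qed

lemma M_Nn0: "M \<subseteq> Nn 0"
proof
  fix m assume m: "m \<in> M"
  have "act 1 m \<in> {act x m | x m. x \<in> A \<inter> P 0 \<and> m \<in> M}" using A1 m P_0 by blast
  then have "act 1 m \<in> addspan {act x m | x m. x \<in> A \<inter> P 0 \<and> m \<in> M}" by (rule addspan.as_base)
  then show "m \<in> Nn 0" unfolding Nn_eq by (simp add: act_one)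
qed

lemma R_N0: "n \<ge> N0 \<Longrightarrow> y \<in> R n \<Longrightarrow> y = 0"
proof -
  assume n: "n \<ge> N0" and y: "y \<in> R n"
  have "X n \<subseteq> {0}"
  proof
    fix z assume "z \<in> X n"
    then obtain x m where xm: "z = act x m" "x \<in> P n" unfolding X_def by blast
    then have "x = 0" using P_zero[OF n] by blast
    then show "z \<in> {0}" using xm(1) act_zerol by simp
  qed
  then have "addspan (X n) \<subseteq> addspan {0}" by (rule addspan_mono)
  then show ?thesis using y addspan_zero_set unfolding R_eq by blast
qed

lemma R_act: "a \<in> A \<inter> P p \<Longrightarrow> b \<in> R q \<Longrightarrow> act a b \<in> R (p + q)"
proof -
  assume a: "a \<in> A \<inter> P p" and b: "b \<in> R q"
  have "act a b \<in> M" using M_act a b unfolding R_eq by blast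
  moreover have "act a b \<in> addspan (X (p + q))"
  proof (rule addspan_map[where f = "act a"])
    show "act a (u + v) = act a u + act a v" for u v by (rule act_addr)
    show "b \<in> addspan (X q)" using b unfolding R_eq by blast
    fix z assume "z \<in> X q"
    then obtain x m where z: "z = act x m" "x \<in> P q" unfolding X_def by blast
    then have "act a z = act (a * x) m" "a * x \<in> P (p + q)" using a P_mul by (auto simp: act_mul)
    then show "act a z \<in> addspan (X (p + q))" unfolding X_def by (blast intro: addspan.as_base)
  qed
  ultimately show ?thesis unfolding R_eq by blast
qed

lemma Nn_act: "a \<in> A \<inter> P p \<Longrightarrow> b \<in> Nn q \<Longrightarrow> act a b \<in> Nn (p + q)"
proof -
  assume a: "a \<in> A \<inter> P p" and b: "b \<in> Nn q"
  show ?thesis unfolding Nn_eq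
  proof (rule addspan_map[where f = "act a"])
    show "act a (u + v) = act a u + act a v" for u v by (rule act_addr)
    show "b \<in> addspan {act x m | x m. x \<in> A \<inter> P q \<and> m \<in> M}" using b unfolding Nn_eq .
    fix z assume "z \<in> {act x m | x m. x \<in> A \<inter> P q \<and> m \<in> M}"
    then obtain x m where z: "z = act x m" "x \<in> A \<inter> P q" "m \<in> M" by blast
    then have "act a z = act (a * x) m" "a * x \<in> A \<inter> P (p + q)" using a P_mul A_mul by (auto simp: act_mul)
    then show "act a z \<in> addspan {act x m | x m. x \<in> A \<inter> P (p + q) \<and> m \<in> M}"
      using z(3) by (blast intro: addspan.as_base)
  qed
qed

lemma Nn_R: "Nn r \<subseteq> R r"
  unfolding Nn_eq
proof (rule addspan_sub[OF R_subgrp], rule subsetI)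
  fix z assume "z \<in> {act x m | x m. x \<in> A \<inter> P r \<and> m \<in> M}"
  then obtain x m where z: "z = act x m" "x \<in> A \<inter> P r" "m \<in> M" by blast
  have "z \<in> M" using M_act z by blast
  moreover have "z \<in> X r" unfolding X_def using z by blast
  ultimately show "z \<in> R r" unfolding R_eq by (blast intro: addspan.as_base)
qed

lemma gract_mod:
  assumes xs: "\<And>i. i \<le> n \<Longrightarrow> xs i \<in> F i" "\<And>i. i \<le> n \<Longrightarrow> c i = coset (F (Suc i)) (xs i)"
    and ys: "\<And>j. j \<le> n \<Longrightarrow> ys j \<in> R j" "\<And>j. j \<le> n \<Longrightarrow> d j = coset (R (Suc j)) (ys j)"
  shows "gract act F R c d n = coset (R (Suc n)) (\<Sum>i\<le>n. act (xs i) (ys (n - i)))"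
proof (rule gract_coset[where x = xs and y = "\<lambda>i. ys (n - i)"])
  show "act (a + b) m = act a m + act b m" for a b m by (rule act_addl)
  show "act a (m + k) = act a m + act a k" for a m k by (rule act_addr)
  show "subgrp (R (Suc n))" "\<And>i. subgrp (F i)" "\<And>j. subgrp (R j)" using R_subgrp F_subgrp by auto
  show "\<And>i. i \<le> n \<Longrightarrow> c i = coset (F (Suc i)) (xs i)" by (rule xs(2))
  show "\<And>i. i \<le> n \<Longrightarrow> d (n - i) = coset (R (Suc (n - i))) (ys (n - i))" using ys(2) by simp
next
  fix i a b assume i: "i \<le> n" and a: "a \<in> F (Suc i)" and b: "b \<in> coset (R (Suc (n - i))) (ys (n - i))"
  have "b - ys (n - i) \<in> R (Suc (n - i))" using b unfolding mem_coset .
  then have "b - ys (n - i) \<in> R (n - i)" using R_anti[of "n - i" "Suc (n - i)"] by auto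
  moreover have yR: "ys (n - i) \<in> R (n - i)" using ys(1)[of "n - i"] by simp
  ultimately have "(b - ys (n - i)) + ys (n - i) \<in> R (n - i)"
    using subgrpD(2)[OF R_subgrp] by blast
  then have "b \<in> R (n - i)" by simp
  moreover have "a \<in> A \<inter> P (Suc i)" using a unfolding ratil_eq .
  ultimately have "act a b \<in> R (Suc i + (n - i))" using R_act by blast
  then show "act a b \<in> R (Suc n)" using i by (simp add: Suc_diff_le)
next
  fix i b assume i: "i \<le> n" and b: "b \<in> R (Suc (n - i))"
  have "xs i \<in> A \<inter> P i" using xs(1)[OF i] unfolding ratil_eq .
  then have "act (xs i) b \<in> R (i + Suc (n - i))" using R_act b by blast
  then show "act (xs i) b \<in> R (Suc n)" using i by simp
qed

lemma sum_in_R: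
  assumes "\<And>i. i \<le> n \<Longrightarrow> xs i \<in> F i" "\<And>j. j \<le> n \<Longrightarrow> ys j \<in> R j"
  shows "(\<Sum>i\<le>n. act (xs i) (ys (n - i))) \<in> R n"
proof (rule subgrp_sum[OF R_subgrp], rule ballI)
  fix i assume "i \<in> {..n}"
  then have i: "i \<le> n" by simp
  have "xs i \<in> A \<inter> P i" using assms(1)[OF i] unfolding ratil_eq .
  then have "act (xs i) (ys (n - i)) \<in> R (i + (n - i))" using R_act assms(2) by simp
  then show "act (xs i) (ys (n - i)) \<in> R n" using i by simp
qed

lemma sum_in_Nn:
  assumes "\<And>i. i \<le> n \<Longrightarrow> xs i \<in> F i" "\<And>j. j \<le> n \<Longrightarrow> ys j \<in> Nn j"
  shows "(\<Sum>i\<le>n. act (xs i) (ys (n - i))) \<in> Nn n"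
proof (rule subgrp_sum[OF Nn_subgrp], rule ballI)
  fix i assume "i \<in> {..n}"
  then have i: "i \<le> n" by simp
  have "xs i \<in> A \<inter> P i" using assms(1)[OF i] unfolding ratil_eq .
  then have "act (xs i) (ys (n - i)) \<in> Nn (i + (n - i))" using Nn_act assms(2) by simp
  then show "act (xs i) (ys (n - i)) \<in> Nn n" using i by simp
qed

lemma R_grcarI: "\<forall>r. \<exists>y\<in>R r. c r = coset (R (Suc r)) y \<Longrightarrow> c \<in> grcar R"
  by (rule grcarI[where N = N0]) (use R_N0 in auto)

lemma F_grcarI: "\<forall>r. \<exists>y\<in>F r. c r = coset (F (Suc r)) y \<Longrightarrow> c \<in> grcar F"
  by (rule grcarI[where N = N0]) (use P_zero in \<open>auto simp: ratil_eq\<close>)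

abbreviation S0 :: "(nat \<Rightarrow> 'm set) set" where
  "S0 \<equiv> {d \<in> grcar R. \<forall>n>0. d n = R (Suc n)}"

lemma grspan_sub: "d \<in> grspan act F R S0 \<Longrightarrow> d \<in> grcar R"
proof (induction rule: grspan.induct)
  case (gs_base d) then show ?case by blast
next
  case gs_zero
  show ?case unfolding grzero_def
  proof (rule R_grcarI, rule allI)
    fix r
    have "R (Suc r) = coset (R (Suc r)) 0" by (simp add: coset_zero)
    then show "\<exists>y\<in>R r. R (Suc r) = coset (R (Suc r)) y" using subgrpD(1)[OF R_subgrp] by blast
  qed
next
  case (gs_add c d)
  obtain yc where yc: "\<And>r. yc r \<in> R r" "\<And>r. c r = coset (R (Suc r)) (yc r)"
    using grcar_reps[OF gs_add.IH(1)] by blast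
  obtain yd where yd: "\<And>r. yd r \<in> R r" "\<And>r. d r = coset (R (Suc r)) (yd r)"
    using grcar_reps[OF gs_add.IH(2)] by blast
  have "gradd R c d = (\<lambda>r. coset (R (Suc r)) (yc r + yd r))"
  proof -
    have "c = (\<lambda>r. coset (R (Suc r)) (yc r))" "d = (\<lambda>r. coset (R (Suc r)) (yd r))"
      using yc(2) yd(2) by auto
    then show ?thesis using gradd_coset[where G = R, OF R_subgrp] by simp
  qed
  then show ?case using subgrpD(2)[OF R_subgrp yc(1) yd(1)] by (intro R_grcarI) auto
next
  case (gs_act c d)
  obtain xs where xs: "\<And>r. xs r \<in> F r" "\<And>r. c r = coset (F (Suc r)) (xs r)"
    using grcar_reps[OF gs_act.hyps(1)] by blast
  obtain ys where ys: "\<And>r. ys r \<in> R r" "\<And>r. d r = coset (R (Suc r)) (ys r)"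
    using grcar_reps[OF gs_act.IH] by blast
  have "\<forall>n. \<exists>y\<in>R n. gract act F R c d n = coset (R (Suc n)) y"
  proof
    fix n
    show "\<exists>y\<in>R n. gract act F R c d n = coset (R (Suc n)) y"
      using gract_mod[of n xs c ys d] sum_in_R[of n xs ys] xs ys by blast
  qed
  then show ?case by (rule R_grcarI)
qed

lemma single_R: "m \<in> R k \<Longrightarrow> grsingle R k m \<in> grcar R"
  unfolding grsingle_coset
  by (rule R_grcarI) (use subgrpD(1)[OF R_subgrp] in auto)

lemma single_F: "x \<in> F k \<Longrightarrow> grsingle F k x \<in> grcar F"
  unfolding grsingle_coset
  by (rule F_grcarI) (use subgrpD(1)[OF F_subgrp] in auto)

lemma sum_single:
  fixes g :: "nat \<Rightarrow> 'm"
  assumes "\<And>i. i \<le> n \<Longrightarrow> g i = (if i = k \<and> n = k' then v else 0)" "k \<le> k'"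
  shows "(\<Sum>i\<le>n. g i) = (if n = k' then v else 0)"
proof (cases "n = k'")
  case True
  then have "(\<Sum>i\<le>n. g i) = (\<Sum>i\<le>n. if i = k then v else 0)" using assms(1) by (intro sum.cong) auto
  also have "\<dots> = v" using True assms(2) by (simp add: sum.delta)
  finally show ?thesis using True by simp
next
  case False
  then show ?thesis using assms(1) by simp
qed

lemma singles_in:
  assumes "m \<in> Nn k"
  shows "grsingle R k m \<in> grspan act F R S0"
  using assms unfolding Nn_eq
proof (induction rule: addspan.induct)
  case as_zero
  have "grsingle R k 0 = grzero R" unfolding grsingle_coset grzero_def by (rule ext) (simp add: coset_zero)
  then show ?case by (simp add: grspan.gs_zero)
next
  case (as_base z)
  then obtain x m where z: "z = act x m" "x \<in> A \<inter> P k" "m \<in> M" by blast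
  have xF: "x \<in> F k" using z(2) unfolding ratil_eq .
  have mR: "m \<in> R 0" using z(3) R_0 by simp
  define xs where "xs i = (if i = k then x else 0)" for i :: nat
  define ys where "ys j = (if j = 0 then m else 0)" for j :: nat
  have "gract act F R (grsingle F k x) (grsingle R 0 m) = grsingle R k z"
  proof (rule ext)
    fix n
    have "gract act F R (grsingle F k x) (grsingle R 0 m) n = coset (R (Suc n)) (\<Sum>i\<le>n. act (xs i) (ys (n - i)))"
    proof (rule gract_mod)
      show "\<And>i. i \<le> n \<Longrightarrow> xs i \<in> F i" using xF subgrpD(1)[OF F_subgrp] by (simp add: xs_def)
      show "\<And>i. i \<le> n \<Longrightarrow> grsingle F k x i = coset (F (Suc i)) (xs i)"
        unfolding grsingle_coset xs_def by simp
      show "\<And>j. j \<le> n \<Longrightarrow> ys j \<in> R j" using mR subgrpD(1)[OF R_subgrp] by (simp add: ys_def)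
      show "\<And>j. j \<le> n \<Longrightarrow> grsingle R 0 m j = coset (R (Suc j)) (ys j)"
        unfolding grsingle_coset ys_def by simp
    qed
    also have "(\<Sum>i\<le>n. act (xs i) (ys (n - i))) = (if n = k then z else 0)"
      by (rule sum_single[where k = k]) (auto simp: xs_def ys_def act_zerol act_zeror z(1))
    finally show "gract act F R (grsingle F k x) (grsingle R 0 m) n = grsingle R k z n"
      unfolding grsingle_coset by simp
  qed
  moreover have g1: "grsingle F k x \<in> grcar F" by (rule single_F[OF xF])
  moreover have g2: "grsingle R 0 m \<in> grspan act F R S0"
  proof (rule grspan.gs_base)
    show "grsingle R 0 m \<in> S0" using single_R[OF mR] unfolding grsingle_def by simp
  qed
  ultimately show ?case using grspan.gs_act[OF g1 g2] by simp
next
  case (as_add a b)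
  have "gradd R (grsingle R k a) (grsingle R k b) = grsingle R k (a + b)"
    unfolding grsingle_coset gradd_coset[where G = R, OF R_subgrp] by (rule ext) simp
  then show ?case using grspan.gs_add[OF as_add.IH] by simp
next
  case (as_neg a)
  have aR: "a \<in> R k" using as_neg.hyps Nn_R unfolding Nn_eq by blast
  have m1: "-1 \<in> F 0" unfolding ratil_eq P_0 using subgrpD(3)[OF A_subgrp A1] by simp
  define xs where "xs i = (if i = 0 then (-1::'a) else 0)" for i :: nat
  define ys where "ys j = (if j = k then a else 0)" for j :: nat
  have "gract act F R (grsingle F 0 (-1)) (grsingle R k a) = grsingle R k (- a)"
  proof (rule ext)
    fix n
    have "gract act F R (grsingle F 0 (-1)) (grsingle R k a) n = coset (R (Suc n)) (\<Sum>i\<le>n. act (xs i) (ys (n - i)))"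
    proof (rule gract_mod)
      show "\<And>i. i \<le> n \<Longrightarrow> xs i \<in> F i" using m1 subgrpD(1)[OF F_subgrp] by (simp add: xs_def)
      show "\<And>i. i \<le> n \<Longrightarrow> grsingle F 0 (-1) i = coset (F (Suc i)) (xs i)"
        unfolding grsingle_coset xs_def by simp
      show "\<And>j. j \<le> n \<Longrightarrow> ys j \<in> R j" using aR subgrpD(1)[OF R_subgrp] by (simp add: ys_def)
      show "\<And>j. j \<le> n \<Longrightarrow> grsingle R k a j = coset (R (Suc j)) (ys j)"
        unfolding grsingle_coset ys_def by simp
    qed
    also have "(\<Sum>i\<le>n. act (xs i) (ys (n - i))) = (if n = k then - a else 0)"
      by (rule sum_single[where k = 0]) (auto simp: xs_def ys_def act_zerol act_zeror act_negl act_one)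
    finally show "gract act F R (grsingle F 0 (-1)) (grsingle R k a) n = grsingle R k (- a) n"
      unfolding grsingle_coset by simp
  qed
  moreover have g1: "grsingle F 0 (-1) \<in> grcar F" by (rule single_F[OF m1])
  ultimately show ?case using grspan.gs_act[OF g1 as_neg.IH] by simp
qed

lemma ii_iii:
  assumes H: "\<forall>r. Nn r = R r"
  shows "grspan act F R S0 = grcar R"
proof
  show "grspan act F R S0 \<subseteq> grcar R" using grspan_sub by blast
  show "grcar R \<subseteq> grspan act F R S0"
  proof
    fix c assume c: "c \<in> grcar R"
    obtain ys where ys: "\<And>r. ys r \<in> R r" "\<And>r. c r = coset (R (Suc r)) (ys r)"
      using grcar_reps[OF c] by blast
    define ck where "ck k = (\<lambda>r. coset (R (Suc r)) (if r < k then ys r else 0))" for k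
    have hck: "ck k \<in> grspan act F R S0" for k
    proof (induction k)
      case 0
      have "ck 0 = grzero R" unfolding ck_def grzero_def by (rule ext) (simp add: coset_zero)
      then show ?case by (simp add: grspan.gs_zero)
    next
      case (Suc k)
      have "gradd R (ck k) (grsingle R k (ys k))
          = (\<lambda>n. coset (R (Suc n)) ((if n < k then ys n else 0) + (if n = k then ys k else 0)))"
        unfolding ck_def grsingle_coset by (rule gradd_coset[where G = R, OF R_subgrp])
      also have "\<dots> = ck (Suc k)" unfolding ck_def by (rule ext) auto
      finally have eq: "gradd R (ck k) (grsingle R k (ys k)) = ck (Suc k)" .
      have hs: "grsingle R k (ys k) \<in> grspan act F R S0"
        using singles_in ys(1) H by blast
      show ?case using grspan.gs_add[OF Suc hs] eq by simp
    qed
    have hc: "ck N0 = c"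
    proof (rule ext)
      fix r
      show "ck N0 r = c r"
      proof (cases "r < N0")
        case True then show ?thesis unfolding ck_def ys(2) by simp
      next
        case False
        then have "ys r = 0" using R_N0[of r "ys r"] ys(1)[of r] by simp
        then show ?thesis unfolding ck_def ys(2) by simp
      qed
    qed
    show "c \<in> grspan act F R S0" using hck[of N0] unfolding hc .
  qed
qed

lemma Q_reps:
  "d \<in> grspan act F R S0 \<Longrightarrow> \<forall>n. \<exists>y\<in>Nn n. d n = coset (R (Suc n)) y"
proof (induction rule: grspan.induct)
  case (gs_base d)
  then have d: "d \<in> grcar R" "\<forall>n>0. d n = R (Suc n)" by auto
  obtain ys where ys: "\<And>r. ys r \<in> R r" "\<And>r. d r = coset (R (Suc r)) (ys r)"
    using grcar_reps[OF d(1)] by blast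
  show ?case
  proof
    fix n
    show "\<exists>y\<in>Nn n. d n = coset (R (Suc n)) y"
    proof (cases "n = 0")
      case True
      then have "ys n \<in> Nn n" using ys(1) R_0 M_Nn0 by auto
      then show ?thesis using ys(2) by blast
    next
      case False
      then have "d n = coset (R (Suc n)) 0" using d(2) by (simp add: coset_zero)
      then show ?thesis using subgrpD(1)[OF Nn_subgrp] by blast
    qed
  qed
next
  case gs_zero
  show ?case
  proof
    fix n
    have "grzero R n = coset (R (Suc n)) 0" unfolding grzero_def by (simp add: coset_zero)
    then show "\<exists>y\<in>Nn n. grzero R n = coset (R (Suc n)) y" using subgrpD(1)[OF Nn_subgrp] by blast
  qed
next
  case (gs_add c d)
  show ?case
  proof
    fix n
    obtain y1 where y1: "y1 \<in> Nn n" "c n = coset (R (Suc n)) y1" using gs_add.IH(1) by blast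
    obtain y2 where y2: "y2 \<in> Nn n" "d n = coset (R (Suc n)) y2" using gs_add.IH(2) by blast
    have "gradd R c d n = coset (R (Suc n)) (y1 + y2)"
      unfolding gradd_def y1(2) y2(2) by (rule coset_add[OF R_subgrp])
    then show "\<exists>y\<in>Nn n. gradd R c d n = coset (R (Suc n)) y"
      using subgrpD(2)[OF Nn_subgrp y1(1) y2(1)] by blast
  qed
next
  case (gs_act c d)
  obtain xs where xs: "\<And>r. xs r \<in> F r" "\<And>r. c r = coset (F (Suc r)) (xs r)"
    using grcar_reps[OF gs_act.hyps(1)] by blast
  have "\<forall>r. \<exists>y. y \<in> Nn r \<and> d r = coset (R (Suc r)) y" using gs_act.IH by blast
  then have "\<exists>ys. \<forall>r. ys r \<in> Nn r \<and> d r = coset (R (Suc r)) (ys r)" by (rule choice)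
  then obtain ys where ys: "\<And>r. ys r \<in> Nn r \<and> d r = coset (R (Suc r)) (ys r)" by blast
  show ?case
  proof
    fix n
    have ysR: "\<And>r. ys r \<in> R r" using ys Nn_R by blast
    have "gract act F R c d n = coset (R (Suc n)) (\<Sum>i\<le>n. act (xs i) (ys (n - i)))"
      by (rule gract_mod) (use xs ys ysR in auto)
    moreover have "(\<Sum>i\<le>n. act (xs i) (ys (n - i))) \<in> Nn n"
      by (rule sum_in_Nn) (use xs ys in auto)
    ultimately show "\<exists>y\<in>Nn n. gract act F R c d n = coset (R (Suc n)) y" by blast
  qed
qed

lemma iii_ii:
  assumes H: "grspan act F R S0 = grcar R"
  shows "\<forall>r. Nn r = R r"
proof -
  have step: "\<exists>y\<in>Nn r. m - y \<in> R (Suc r)" if m: "m \<in> R r" for m r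
  proof -
    have "grsingle R r m \<in> grspan act F R S0" using single_R[OF m] H by simp
    then obtain y where y: "y \<in> Nn r" "grsingle R r m r = coset (R (Suc r)) y"
      using Q_reps by blast
    then have "coset (R (Suc r)) m = coset (R (Suc r)) y" unfolding grsingle_def by simp
    then have "m - y \<in> R (Suc r)" using coset_eq_iff[OF R_subgrp] by blast
    then show ?thesis using y(1) by blast
  qed
  have "\<forall>r. N0 \<le> r + k \<longrightarrow> R r \<subseteq> Nn r" for k
  proof (induction k)
    case 0
    show ?case
    proof (intro allI impI subsetI)
      fix r m assume "N0 \<le> r + 0" "m \<in> R r"
      then have "m = 0" using R_N0 by simp
      then show "m \<in> Nn r" using subgrpD(1)[OF Nn_subgrp] by simp
    qed
  next
    case (Suc k)
    show ?case
    proof (intro allI impI subsetI)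
      fix r m assume r: "N0 \<le> r + Suc k" and m: "m \<in> R r"
      obtain y where y: "y \<in> Nn r" "m - y \<in> R (Suc r)" using step[OF m] by blast
      have "N0 \<le> Suc r + k" using r by simp
      then have "R (Suc r) \<subseteq> Nn (Suc r)" using Suc.IH by blast
      then have "m - y \<in> Nn (Suc r)" using y(2) by blast
      then have "m - y \<in> Nn r" using Nn_anti[of r "Suc r"] by auto
      then have "(m - y) + y \<in> Nn r" using subgrpD(2)[OF Nn_subgrp _ y(1)] by blast
      then show "m \<in> Nn r" by simp
    qed
  qed
  then have "R r \<subseteq> Nn r" for r using le_add2[of N0 r] by blast
  then show ?thesis using Nn_R by blast
qed

lemma partB:
  "(tight_lattice act A M \<longleftrightarrow> (\<forall>r. addspan {act x m | x m. x \<in> sumge aa r \<and> m \<in> M} = radM act M r))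
   \<and> ((\<forall>r. addspan {act x m | x m. x \<in> sumge aa r \<and> m \<in> M} = radM act M r)
       \<longleftrightarrow> grspan act (ratil A) (radM act M) {d \<in> grcar (radM act M). \<forall>n>0. d n = radM act M (Suc n)}
           = grcar (radM act M))"
proof -
  have e: "sumge aa r = ratil A r" for r by (simp add: partA2 ratil_eq)
  have 1: "tight_lattice act A M \<longleftrightarrow> (\<forall>r. addspan {act x m | x m. x \<in> sumge aa r \<and> m \<in> M} = radM act M r)"
    unfolding tight_lattice_def e by (auto simp: eq_commute)
  have 2: "(\<forall>r. addspan {act x m | x m. x \<in> sumge aa r \<and> m \<in> M} = radM act M r) \<longleftrightarrow> (\<forall>r. Nn r = R r)"
    unfolding Nn_def ..
  show ?thesis unfolding 1 2 using ii_iii iii_ii by blast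
qed

end



theorem proposition5p2:
  fixes Ov :: "'k::field set" and sc :: "'k \<Rightarrow> 'a::ring_1 \<Rightarrow> 'a"
    and A :: "'a set" and gK aa :: "nat \<Rightarrow> 'a set"
  assumes "dvr Ov"
    and "kalg sc"
    and "1 \<in> A" and "\<forall>x\<in>A. \<forall>y\<in>A. x * y \<in> A"
    and "\<exists>B. finite B \<and> B \<subseteq> A \<and> lin_indep sc B \<and> A = lspan sc Ov B \<and> lspan sc UNIV B = UNIV"
    and "tight_grading sc gK"
    and "\<forall>r. submod sc Ov (aa r)" and "graded_ds aa A"
    and "\<forall>i j. \<forall>x\<in>aa i. \<forall>y\<in>aa j. x * y \<in> aa (i + j)" and "1 \<in> aa 0"
    and "\<forall>r. lspan sc UNIV (aa r) = gK r"
  shows "(\<forall>r. aa r = A \<inter> gK r)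
     \<and> (\<forall>r. sumge aa r = ratil A r)
     \<and> (\<exists>\<phi>. bij_betw \<phi> A (grcar (ratil A))
          \<and> (\<forall>x\<in>A. \<forall>y\<in>A. \<phi> (x + y) = gradd (ratil A) (\<phi> x) (\<phi> y))
          \<and> (\<forall>x\<in>A. \<forall>y\<in>A. \<phi> (x * y) = grmul (ratil A) (\<phi> x) (\<phi> y))
          \<and> \<phi> 1 = grone (ratil A)
          \<and> (\<forall>c\<in>Ov. \<forall>x\<in>A. \<phi> (sc c x) = grsmul sc (ratil A) c (\<phi> x))
          \<and> (\<forall>r. \<forall>x\<in>aa r. \<phi> x = grsingle (ratil A) r x))
     \<and> (\<forall>(scm :: 'k \<Rightarrow> 'm::ab_group_add \<Rightarrow> 'm) act M.
          kmod sc scm act \<and> is_lattice Ov scm act A M \<longrightarrow>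
            (tight_lattice act A M
               \<longleftrightarrow> (\<forall>r. addspan {act x m | x m. x \<in> sumge aa r \<and> m \<in> M} = radM act M r))
          \<and> ((\<forall>r. addspan {act x m | x m. x \<in> sumge aa r \<and> m \<in> M} = radM act M r)
               \<longleftrightarrow> grspan act (ratil A) (radM act M)
                      {d \<in> grcar (radM act M). \<forall>n>0. d n = radM act M (Suc n)}
                    = grcar (radM act M)))"
proof -
  have tga: "tga sc gK Ov A aa"
    unfolding tga_def tga_axioms_def tg_def using assms by blast
  interpret tga sc gK Ov A aa by (rule tga)
  have a1: "\<forall>r. aa r = A \<inter> gK r" using partA1 by blast
  have a2: "\<forall>r. sumge aa r = ratil A r" using partA2 ratil_eq by simp
  have a3: "\<exists>\<phi>. bij_betw \<phi> A (grcar (ratil A))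
          \<and> (\<forall>x\<in>A. \<forall>y\<in>A. \<phi> (x + y) = gradd (ratil A) (\<phi> x) (\<phi> y))
          \<and> (\<forall>x\<in>A. \<forall>y\<in>A. \<phi> (x * y) = grmul (ratil A) (\<phi> x) (\<phi> y))
          \<and> \<phi> 1 = grone (ratil A)
          \<and> (\<forall>c\<in>Ov. \<forall>x\<in>A. \<phi> (sc c x) = grsmul sc (ratil A) c (\<phi> x))
          \<and> (\<forall>r. \<forall>x\<in>aa r. \<phi> x = grsingle (ratil A) r x)"
    using phi_bij phi_add phi_mul phi_one phi_sc phi_single by blast
  have a4: "\<forall>(scm :: 'k \<Rightarrow> 'm::ab_group_add \<Rightarrow> 'm) act M.
          kmod sc scm act \<and> is_lattice Ov scm act A M \<longrightarrow>
            (tight_lattice act A M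
               \<longleftrightarrow> (\<forall>r. addspan {act x m | x m. x \<in> sumge aa r \<and> m \<in> M} = radM act M r))
          \<and> ((\<forall>r. addspan {act x m | x m. x \<in> sumge aa r \<and> m \<in> M} = radM act M r)
               \<longleftrightarrow> grspan act (ratil A) (radM act M)
                      {d \<in> grcar (radM act M). \<forall>n>0. d n = radM act M (Suc n)}
                    = grcar (radM act M))"
  proof (intro allI impI)
    fix scm :: "'k \<Rightarrow> 'm::ab_group_add \<Rightarrow> 'm" and act :: "'a \<Rightarrow> 'm \<Rightarrow> 'm" and M :: "'m set"
    assume h: "kmod sc scm act \<and> is_lattice Ov scm act A M"
    have "tgm sc gK Ov A aa scm act M"
      unfolding tgm_def tgm_axioms_def using tga h by blast
    then interpret tgm sc gK Ov A aa scm act M .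
    show "(tight_lattice act A M
               \<longleftrightarrow> (\<forall>r. addspan {act x m | x m. x \<in> sumge aa r \<and> m \<in> M} = radM act M r))
          \<and> ((\<forall>r. addspan {act x m | x m. x \<in> sumge aa r \<and> m \<in> M} = radM act M r)
               \<longleftrightarrow> grspan act (ratil A) (radM act M)
                      {d \<in> grcar (radM act M). \<forall>n>0. d n = radM act M (Suc n)}
                    = grcar (radM act M))"
      by (rule partB)
  qed
  show ?thesis using a1 a2 a3 a4 by blast
qed

end
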